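(* Let $D_1\subset\mathbb{R}^2$ be an open disc centered at the origin, let $\boldsymbol{\gamma}_1,\dots,\boldsymbol{\gamma}_m$ be distinct unit vectors in $\mathbb{R}^2$ and $c_1,\dots,c_m$ nonzero reals. The vector-valued star transform $\mathcal{S}$ (acting on vector fields on $\mathbb{R}^2$ with components in $C^2_c(D_1)$) is invertible if and only if it is not symmetric.
   Context: For $\mathbf{x}=(x_1,x_2)$ set $\mathbf{x}^\perp=(-x_2,x_1)$. For a unit vector $\boldsymbol{\gamma}$, $\mathcal{X}_{\boldsymbol{\gamma}}h(\mathbf{x})=\int_0^\infty h(\mathbf{x}+t\boldsymbol{\gamma})\,dt$. The vector-valued star transform is $\mathcal{S}\mathbf{f}=\sum_{i=1}^m c_i\,\mathcal{X}_{\boldsymbol{\gamma}_i}\begin{bmatrix}\mathbf{f}\cdot\boldsymbol{\gamma}_i\\ \mathbf{f}\cdot\boldsymbol{\gamma}_i^\perp\end{bmatrix}$. Invertible means that every such $\mathbf{f}$ is uniquely determined by $\mathcal{S}\mathbf{f}$. $\mathcal{S}$ is called symmetric if $m=2k$ for some $k\in\mathbb{N}$ and, after possible re-indexing, $\boldsymbol{\gamma}_i=-\boldsymbol{\gamma}_{k+i}$ and $c_i=-c_{k+i}$ for all $i=1,\dots,k$. *)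

theory Defs
  imports "HOL-Analysis.Analysis"
begin

definition perp :: "real^2 \<Rightarrow> real^2" where
  "perp x = vector [- (x$2), x$1]"

definition ray_transform :: "real^2 \<Rightarrow> (real^2 \<Rightarrow> real) \<Rightarrow> real^2 \<Rightarrow> real" where
  "ray_transform g h x = integral {0..} (\<lambda>t::real. h (x + t *\<^sub>R g))"

definition pderiv2 :: "(real^2 \<Rightarrow> real) \<Rightarrow> 2 \<Rightarrow> real^2 \<Rightarrow> real" where
  "pderiv2 h j x = frechet_derivative h (at x) (axis j 1)"

definition C2 :: "(real^2 \<Rightarrow> real) \<Rightarrow> bool" where
  "C2 h \<longleftrightarrow> (\<forall>x. h differentiable (at x))
     \<and> (\<forall>j x. pderiv2 h j differentiable (at x))
     \<and> (\<forall>j k. continuous_on UNIV (pderiv2 (pderiv2 h j) k))"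

definition support :: "(real^2 \<Rightarrow> real) \<Rightarrow> (real^2) set" where
  "support h = closure {x. h x \<noteq> 0}"

definition C2c_disc :: "real \<Rightarrow> (real^2 \<Rightarrow> real) \<Rightarrow> bool" where
  "C2c_disc r h \<longleftrightarrow> C2 h \<and> compact (support h) \<and> support h \<subseteq> ball 0 r"

definition admissible_field :: "real \<Rightarrow> (real^2 \<Rightarrow> real^2) \<Rightarrow> bool" where
  "admissible_field r f \<longleftrightarrow> (\<forall>j. C2c_disc r (\<lambda>x. f x $ j))"

definition star_transform ::
  "nat \<Rightarrow> (nat \<Rightarrow> real^2) \<Rightarrow> (nat \<Rightarrow> real) \<Rightarrow> (real^2 \<Rightarrow> real^2) \<Rightarrow> real^2 \<Rightarrow> real^2" where
  "star_transform m g c f x =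
     (\<Sum>i<m. c i *\<^sub>R vector [ray_transform (g i) (\<lambda>y. f y \<bullet> g i) x,
                             ray_transform (g i) (\<lambda>y. f y \<bullet> perp (g i)) x])"

definition star_invertible :: "real \<Rightarrow> nat \<Rightarrow> (nat \<Rightarrow> real^2) \<Rightarrow> (nat \<Rightarrow> real) \<Rightarrow> bool" where
  "star_invertible r m g c \<longleftrightarrow>
     (\<forall>f1 f2. admissible_field r f1 \<longrightarrow> admissible_field r f2 \<longrightarrow>
        star_transform m g c f1 = star_transform m g c f2 \<longrightarrow> f1 = f2)"

definition star_symmetric :: "nat \<Rightarrow> (nat \<Rightarrow> real^2) \<Rightarrow> (nat \<Rightarrow> real) \<Rightarrow> bool" where
  "star_symmetric m g c \<longleftrightarrow>
     (\<exists>k\<ge>1. m = 2 * k \<and> (\<exists>p. p permutes {..<m} \<and>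
        (\<forall>i<k. g (p i) = - g (p (k + i)) \<and> c (p i) = - c (p (k + i)))))"

end

theory Submission
  imports Defs "HOL-Computational_Algebra.Polynomial"
begin

definition cs :: "real \<Rightarrow> (real^2 \<Rightarrow> real) \<Rightarrow> bool" where
  "cs R h \<longleftrightarrow> continuous_on UNIV h \<and> 0 \<le> R \<and> (\<forall>x. R \<le> norm x \<longrightarrow> h x = 0)"

definition bx :: "real \<Rightarrow> (real^2) set" where
  "bx R = cbox (\<chi> i. -R) (\<chi> i. R)"

lemma cs_cont: "cs R h \<Longrightarrow> continuous_on S h"
  unfolding cs_def using continuous_on_subset by blast

lemma cs_zero: "cs R h \<Longrightarrow> R \<le> norm x \<Longrightarrow> h x = 0"
  unfolding cs_def by blast

lemma cs_mono: "cs R h \<Longrightarrow> R \<le> R' \<Longrightarrow> cs R' h"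
  unfolding cs_def by force

lemma cs_diff: "cs R h1 \<Longrightarrow> cs R h2 \<Longrightarrow> cs R (\<lambda>x. h1 x - h2 x)"
  unfolding cs_def by (auto intro!: continuous_intros)

lemma cs_add: "cs R h1 \<Longrightarrow> cs R h2 \<Longrightarrow> cs R (\<lambda>x. h1 x + h2 x)"
  unfolding cs_def by (auto intro!: continuous_intros)

lemma cs_cmult: "cs R h \<Longrightarrow> cs R (\<lambda>x. a * h x)"
  unfolding cs_def by (auto intro!: continuous_intros)

lemma cs_multc: "cs R h \<Longrightarrow> cs R (\<lambda>x. h x * a)"
  unfolding cs_def by (auto intro!: continuous_intros)

lemma cs_mult_cont: "cs R h \<Longrightarrow> continuous_on UNIV w \<Longrightarrow> cs R (\<lambda>x. h x * w x)"
  unfolding cs_def by (auto intro!: continuous_intros)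

lemma cs_0: "0 \<le> R \<Longrightarrow> cs R (\<lambda>x. 0)"
  unfolding cs_def by auto

lemma cs_sum: assumes "0 \<le> R" shows "finite I \<Longrightarrow> (\<And>i. i \<in> I \<Longrightarrow> cs R (h i)) \<Longrightarrow> cs R (\<lambda>x. \<Sum>i\<in>I. h i x)"
proof (induction I rule: finite_induct)
  case empty then show ?case by (simp add: cs_0 assms)
next
  case (insert a I) then show ?case by (simp add: cs_add)
qed

lemma cs_translate:
  fixes a :: "real^2"
  shows "cs R h \<Longrightarrow> cs (R + norm a) (\<lambda>x. h (x + a))"
  unfolding cs_def
proof safe
  assume "continuous_on UNIV h"
  then show "continuous_on UNIV (\<lambda>x. h (x + a))"
    by (auto intro!: continuous_intros continuous_on_compose2[of UNIV h])
next
  show "0 \<le> R + norm a" if "0 \<le> R" using that by simp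
next
  fix x :: "real^2" assume "\<forall>x. R \<le> norm x \<longrightarrow> h x = 0" "R + norm a \<le> norm x"
  moreover have "norm x \<le> norm (x + a) + norm a" by (metis add_diff_cancel norm_triangle_ineq4)
  ultimately show "h (x + a) = 0" by auto
qed

lemma outside_bx: "x \<notin> bx R \<Longrightarrow> R < norm x"
proof -
  assume "x \<notin> bx R"
  then have "\<exists>i. x$i < -R \<or> R < x$i" unfolding bx_def mem_box_cart by (auto simp: not_le)
  then obtain i where "x$i < -R \<or> R < x$i" by blast
  then have "R < \<bar>x$i\<bar>" by auto
  then show ?thesis using component_le_norm_cart[of x i] by linarith
qed

lemma cs_has_integral: 
  assumes "cs R h" "R \<le> B"
  shows "(h has_integral integral (bx B) h) UNIV"
proof -
  have "h integrable_on bx B" unfolding bx_def by (rule integrable_continuous, rule cs_cont[OF assms(1)])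
  then have "(h has_integral integral (bx B) h) (bx B)" by blast
  then show ?thesis
    by (rule has_integral_on_superset) (use assms outside_bx cs_zero in \<open>force+\<close>)
qed

lemma cs_integral: "cs R h \<Longrightarrow> R \<le> B \<Longrightarrow> integral UNIV h = integral (bx B) h"
  using cs_has_integral by blast

lemma cs_integrable: "cs R h \<Longrightarrow> h integrable_on UNIV"
  using cs_has_integral[of R h R] by blast

lemma cs_line: 
  assumes "cs R h" "norm g = 1" "R + norm x \<le> \<bar>t\<bar>"
  shows "h (x + t *\<^sub>R g) = 0"
proof -
  have "norm (t *\<^sub>R g) \<le> norm (x + t *\<^sub>R g) + norm x"
    by (metis add.commute add_diff_cancel norm_triangle_ineq4)
  then have "R \<le> norm (x + t *\<^sub>R g)" using assms by auto
  then show ?thesis using assms cs_zero by blast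
qed

lemma line_cont: "cs R h \<Longrightarrow> continuous_on S (\<lambda>t. h (x + t *\<^sub>R g))"
  unfolding cs_def
  by (auto intro!: continuous_intros continuous_on_compose2[of UNIV h])

lemma ray_eq:
  assumes "cs R h" "norm g = 1" "R + norm x \<le> T"
  shows "ray_transform g h x = integral {0..T} (\<lambda>t. h (x + t *\<^sub>R g))"
proof -
  let ?f = "\<lambda>t. h (x + t *\<^sub>R g)"
  have T: "0 \<le> T" using assms(3) assms(1) unfolding cs_def by (smt (verit) norm_ge_zero)
  have "?f integrable_on {0..T}" by (rule integrable_continuous_interval, rule line_cont[OF assms(1)])
  then have 1: "(?f has_integral integral {0..T} ?f) {0..T}" by blast
  have 2: "(?f has_integral 0) {T..}"
    by (rule has_integral_is_0) (use assms cs_line in auto)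
  have "(?f has_integral (integral {0..T} ?f + 0)) ({0..T} \<union> {T..})"
    by (rule has_integral_Un[OF 1 2]) (use T in \<open>auto simp: Int_commute\<close>)
  moreover have "{0..T} \<union> {T..} = {0..}" using T by auto
  ultimately show ?thesis unfolding ray_transform_def by (simp add: integral_unique)
qed

lemma ray_diff:
  assumes "cs R h1" "cs R h2" "norm g = 1"
  shows "ray_transform g (\<lambda>y. h1 y - h2 y) x = ray_transform g h1 x - ray_transform g h2 x"
proof -
  have d: "cs R (\<lambda>y. h1 y - h2 y)" using assms cs_diff by blast
  let ?T = "R + norm x"
  show ?thesis
    unfolding ray_eq[OF d assms(3) order_refl] ray_eq[OF assms(1,3) order_refl] ray_eq[OF assms(2,3) order_refl]
    by (rule integral_diff; rule integrable_continuous_interval, rule line_cont, rule assms)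
qed

definition Mop :: "real^2 \<Rightarrow> real \<Rightarrow> (real^2 \<Rightarrow> real) \<Rightarrow> real^2 \<Rightarrow> real" where
  "Mop g s h x = integral {0..s} (\<lambda>t. h (x + t *\<^sub>R g))"

lemma delta_ray:
  assumes "cs R h" "norm g = 1" "0 \<le> s"
  shows "ray_transform g h x - ray_transform g h (x + s *\<^sub>R g) = Mop g s h x"
proof -
  let ?f = "\<lambda>t. h (x + t *\<^sub>R g)"
  define T where "T = R + norm x + s"
  have n: "norm (x + s *\<^sub>R g) \<le> norm x + s" using assms norm_triangle_ineq[of x "s *\<^sub>R g"] by auto
  have T0: "0 \<le> T" unfolding T_def using assms(1,3) unfolding cs_def by (smt (verit) norm_ge_zero)
  have 1: "ray_transform g h x = integral {0..T + s} ?f"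
    by (rule ray_eq[OF assms(1,2)]) (use assms in \<open>auto simp: T_def\<close>)
  have "ray_transform g h (x + s *\<^sub>R g) = integral {0..T} (\<lambda>t. h ((x + s *\<^sub>R g) + t *\<^sub>R g))"
    by (rule ray_eq[OF assms(1,2)]) (use n in \<open>auto simp: T_def\<close>)
  also have "\<dots> = integral {0..T} (?f \<circ> (\<lambda>t. t + s))"
    by (intro integral_cong) (simp add: scaleR_add_left add_ac)
  finally have 2: "ray_transform g h (x + s *\<^sub>R g) = integral {0..T} (?f \<circ> (\<lambda>t. t + s))" .
  have 3: "integral {0..T} (?f \<circ> (\<lambda>t. t + s)) = integral {s..T+s} ?f"
    using integral_shift[of 0 s T ?f] line_cont[OF assms(1)] by simp
  have 4: "integral {0..s} ?f + integral {s..T+s} ?f = integral {0..T+s} ?f"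
    by (rule Henstock_Kurzweil_Integration.integral_combine) (use assms T0 in \<open>auto intro!: integrable_continuous_interval line_cont\<close>)
  show ?thesis unfolding Mop_def 1 2 3 using 4 by simp
qed

lemma cs_Mop:
  assumes "cs R h" "norm g = 1" "0 \<le> s"
  shows "cs (R + s) (Mop g s h)"
  unfolding cs_def
proof safe
  show "0 \<le> R + s" using assms unfolding cs_def by simp
next
  have "continuous_on (UNIV \<times> cbox 0 s) (\<lambda>(x, t). h (x + t *\<^sub>R g))"
    using assms(1) unfolding cs_def
    by (auto intro!: continuous_intros continuous_on_compose2[of UNIV h] simp: split_beta)
  from integral_continuous_on_param[OF this]
  show "continuous_on UNIV (Mop g s h)" unfolding Mop_def by (simp add: cbox_interval)
next
  fix x :: "real^2" assume x: "R + s \<le> norm x"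
  have "h (x + t *\<^sub>R g) = 0" if "t \<in> {0..s}" for t
  proof -
    have "norm x \<le> norm (x + t *\<^sub>R g) + norm (t *\<^sub>R g)" by (metis add_diff_cancel norm_triangle_ineq4)
    then have "R \<le> norm (x + t *\<^sub>R g)" using x that assms by auto
    then show ?thesis using assms(1) cs_zero by blast
  qed
  then have "integral {0..s} (\<lambda>t. h (x + t *\<^sub>R g)) = integral {0..s} (\<lambda>t. 0)"
    by (intro integral_cong) auto
  then show "Mop g s h x = 0" unfolding Mop_def by simp
qed

lemma sum_Pow_insert:
  assumes "finite J" "i \<notin> J"
  shows "(\<Sum>B\<in>Pow (insert i J). F B) = (\<Sum>B\<in>Pow J. F B) + (\<Sum>B\<in>Pow J. F (insert i B))"
proof -
  have d: "Pow J \<inter> insert i ` Pow J = {}" using assms by auto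
  have inj: "inj_on (insert i) (Pow J)"
    unfolding inj_on_def using assms by (metis PowD insert_ident subsetD)
  show ?thesis unfolding Pow_insert
    by (subst sum.union_disjoint) (use assms d in \<open>auto simp: sum.reindex[OF inj]\<close>)
qed

definition Dop :: "nat set \<Rightarrow> (nat \<Rightarrow> real^2) \<Rightarrow> (real^2 \<Rightarrow> real) \<Rightarrow> real^2 \<Rightarrow> real" where
  "Dop J a \<phi> x = (\<Sum>B\<in>Pow J. (-1) ^ card B * \<phi> (x + sum a B))"

lemma Dop_empty[simp]: "Dop {} a \<phi> x = \<phi> x"
  unfolding Dop_def by simp

lemma Dop_insert:
  assumes "finite J" "i \<notin> J"
  shows "Dop (insert i J) a \<phi> x = Dop J a \<phi> x - Dop J a \<phi> (x + a i)"
proof -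
  have "Dop (insert i J) a \<phi> x = Dop J a \<phi> x + (\<Sum>B\<in>Pow J. (-1) ^ card (insert i B) * \<phi> (x + sum a (insert i B)))"
    unfolding Dop_def by (rule sum_Pow_insert[OF assms])
  also have "(\<Sum>B\<in>Pow J. (-1) ^ card (insert i B) * \<phi> (x + sum a (insert i B)))
     = (\<Sum>B\<in>Pow J. - ((-1) ^ card B * \<phi> ((x + a i) + sum a B)))"
  proof (rule sum.cong[OF refl])
    fix B assume "B \<in> Pow J"
    then have "finite B" "i \<notin> B" using assms finite_subset by auto
    then show "(-1) ^ card (insert i B) * \<phi> (x + sum a (insert i B)) = - ((-1) ^ card B * \<phi> ((x + a i) + sum a B))"
      by (simp add: add_ac)
  qed
  also have "\<dots> = - Dop J a \<phi> (x + a i)" unfolding Dop_def by (simp add: sum_negf)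
  finally show ?thesis by simp
qed

lemma Dop_diff: "Dop J a (\<lambda>y. \<phi> y - \<phi> (y + b)) x = Dop J a \<phi> x - Dop J a \<phi> (x + b)"
  unfolding Dop_def by (simp add: sum_subtractf algebra_simps)

lemma Dop_remove:
  assumes "finite J" "i \<in> J"
  shows "Dop J a \<phi> x = Dop (J - {i}) a (\<lambda>y. \<phi> y - \<phi> (y + a i)) x"
proof -
  have J: "J = insert i (J - {i})" using assms by auto
  show ?thesis
    by (subst J, subst Dop_insert) (use assms in \<open>auto simp: Dop_diff\<close>)
qed

lemma Dop_lin: "Dop J a (\<lambda>y. \<Sum>i\<in>I. c i * \<phi> i y) x = (\<Sum>i\<in>I. c i * Dop J a (\<phi> i) x)"
  unfolding Dop_def by (simp add: sum_distrib_left sum.swap[of _ I] algebra_simps)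

lemma Dop_cong: "(\<And>y. \<phi> y = \<psi> y) \<Longrightarrow> Dop J a \<phi> x = Dop J a \<psi> x"
  unfolding Dop_def by simp

lemma cs_Dop:
  assumes "cs R \<phi>" "finite J"
  shows "cs (R + (\<Sum>j\<in>J. norm (a j))) (Dop J a \<phi>)"
proof -
  have R: "0 \<le> R" using assms cs_def by auto
  have "cs (R + (\<Sum>j\<in>J. norm (a j))) (\<lambda>x. (-1) ^ card B * \<phi> (x + sum a B))" if "B \<in> Pow J" for B
  proof -
    have "norm (sum a B) \<le> (\<Sum>j\<in>B. norm (a j))" by (rule norm_sum)
    also have "\<dots> \<le> (\<Sum>j\<in>J. norm (a j))" using that assms by (intro sum_mono2) auto
    finally show ?thesis using cs_translate[OF assms(1), of "sum a B"]
      by (intro cs_cmult) (auto elim!: cs_mono)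
  qed
  then show ?thesis unfolding Dop_def[abs_def]
    using cs_sum[of "R + (\<Sum>j\<in>J. norm (a j))" "Pow J"] assms R
    by (simp add: sum_nonneg)
qed

definition Ecoef :: "nat set \<Rightarrow> (nat \<Rightarrow> real^2) \<Rightarrow> real^2 \<Rightarrow> real" where
  "Ecoef J a \<xi> = (\<Sum>B\<in>Pow J. (-1) ^ card B * exp (- (\<xi> \<bullet> sum a B)))"

lemma Ecoef_prod: "finite J \<Longrightarrow> Ecoef J a \<xi> = (\<Prod>j\<in>J. 1 - exp (- (\<xi> \<bullet> a j)))"
proof (induction J rule: finite_induct)
  case empty then show ?case by (simp add: Ecoef_def)
next
  case (insert i J)
  have "Ecoef (insert i J) a \<xi> = Ecoef J a \<xi> + (\<Sum>B\<in>Pow J. (-1) ^ card (insert i B) * exp (- (\<xi> \<bullet> sum a (insert i B))))"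
    unfolding Ecoef_def by (rule sum_Pow_insert[OF insert(1,2)])
  also have "(\<Sum>B\<in>Pow J. (-1) ^ card (insert i B) * exp (- (\<xi> \<bullet> sum a (insert i B))))
     = (\<Sum>B\<in>Pow J. - exp (- (\<xi> \<bullet> a i)) * ((-1) ^ card B * exp (- (\<xi> \<bullet> sum a B))))"
  proof (rule sum.cong[OF refl])
    fix B assume "B \<in> Pow J"
    then have "finite B" "i \<notin> B" using insert finite_subset by auto
    then show "(-1) ^ card (insert i B) * exp (- (\<xi> \<bullet> sum a (insert i B))) = - exp (- (\<xi> \<bullet> a i)) * ((-1) ^ card B * exp (- (\<xi> \<bullet> sum a B)))"
      by (simp add: inner_add_right exp_add[symmetric] algebra_simps)
  qed
  also have "\<dots> = - exp (- (\<xi> \<bullet> a i)) * Ecoef J a \<xi>" unfolding Ecoef_def by (simp add: sum_distrib_left)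
  finally show ?case using insert by (simp add: algebra_simps)
qed

definition Lap :: "(real^2 \<Rightarrow> real) \<Rightarrow> real^2 \<Rightarrow> real" where
  "Lap h \<xi> = integral UNIV (\<lambda>x. h x * exp (\<xi> \<bullet> x))"

lemma cs_Lw: "cs R h \<Longrightarrow> cs R (\<lambda>x. h x * exp (\<xi> \<bullet> x))"
  by (rule cs_mult_cont) (auto intro!: continuous_intros)

lemma cs_integral_box:
  assumes "cs R h" "\<And>y. norm y \<le> R \<Longrightarrow> y \<in> cbox c d"
  shows "integral UNIV h = integral (cbox c d) h"
proof -
  have "h integrable_on cbox c d" by (rule integrable_continuous, rule cs_cont[OF assms(1)])
  then have "(h has_integral integral (cbox c d) h) (cbox c d)" by blast
  then have "(h has_integral integral (cbox c d) h) UNIV"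
    by (rule has_integral_on_superset) (use assms cs_zero in \<open>force+\<close>)
  then show ?thesis by blast
qed

lemma bx_contains: 
  assumes "norm y \<le> R" shows "y \<in> bx R"
proof -
  have "\<bar>y$i\<bar> \<le> R" for i using component_le_norm_cart[of y i] assms by linarith
  then have "-R \<le> y$i \<and> y$i \<le> R" for i by (metis abs_le_D1 abs_le_D2 minus_le_iff)
  then show ?thesis unfolding bx_def mem_box_cart by simp
qed

lemma integral_UNIV_translate:
  assumes "cs R u"
  shows "integral UNIV (\<lambda>x. u (x + a)) = integral UNIV u"
proof -
  let ?B = "R + norm a"
  have cs2: "cs ?B (\<lambda>x. u (x + a))" by (rule cs_translate[OF assms])
  have "integral UNIV (\<lambda>x. u (x + a)) = integral (bx ?B) (\<lambda>x. u (x + a))"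
    by (rule cs_integral[OF cs2 order_refl])
  also have "\<dots> = integral (cbox ((\<chi> i. - ?B) + a) ((\<chi> i. ?B) + a)) u"
    using integral_shift_cbox_plus[of "\<chi> i. - ?B" "\<chi> i. ?B" u a] unfolding bx_def
    by (simp add: o_def add.commute)
  also have "\<dots> = integral UNIV u"
  proof (rule cs_integral_box[OF assms, symmetric])
    fix y :: "real^2" assume y: "norm y \<le> R"
    have "norm (y - a) \<le> ?B" using y norm_triangle_ineq4[of y a] by simp
    then have "y - a \<in> bx ?B" by (rule bx_contains)
    then show "y \<in> cbox ((\<chi> i. - ?B) + a) ((\<chi> i. ?B) + a)"
      unfolding bx_def mem_box_cart by (auto simp: algebra_simps)
  qed
  finally show ?thesis .
qed

lemma Lap_translate:
  assumes "cs R h"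
  shows "Lap (\<lambda>x. h (x + a)) \<xi> = exp (- (\<xi> \<bullet> a)) * Lap h \<xi>"
proof -
  have "Lap (\<lambda>x. h (x + a)) \<xi> = integral UNIV (\<lambda>x. exp (- (\<xi> \<bullet> a)) * (h (x + a) * exp (\<xi> \<bullet> (x + a))))"
    unfolding Lap_def by (intro integral_cong) (simp add: inner_add_right exp_add[symmetric] exp_minus field_simps)
  also have "\<dots> = exp (- (\<xi> \<bullet> a)) * integral UNIV (\<lambda>x. h (x + a) * exp (\<xi> \<bullet> (x + a)))"
    by simp
  also have "integral UNIV (\<lambda>x. h (x + a) * exp (\<xi> \<bullet> (x + a))) = Lap h \<xi>"
    unfolding Lap_def using integral_UNIV_translate[OF cs_Lw[OF assms, of \<xi>], of a] by simp
  finally show ?thesis .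
qed

lemma Lap_lin:
  assumes "finite I" "\<And>i. i \<in> I \<Longrightarrow> \<exists>R. cs R (\<phi> i)"
  shows "Lap (\<lambda>x. \<Sum>i\<in>I. c i * \<phi> i x) \<xi> = (\<Sum>i\<in>I. c i * Lap (\<phi> i) \<xi>)"
proof -
  have "Lap (\<lambda>x. \<Sum>i\<in>I. c i * \<phi> i x) \<xi> = integral UNIV (\<lambda>x. \<Sum>i\<in>I. c i * (\<phi> i x * exp (\<xi> \<bullet> x)))"
    unfolding Lap_def by (simp add: sum_distrib_right mult.assoc)
  also have "\<dots> = (\<Sum>i\<in>I. integral UNIV (\<lambda>x. c i * (\<phi> i x * exp (\<xi> \<bullet> x))))"
  proof (rule integral_sum[OF assms(1)])
    fix i assume "i \<in> I"
    then obtain R where "cs R (\<phi> i)" using assms(2) by blast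
    then have "(\<lambda>x. \<phi> i x * exp (\<xi> \<bullet> x)) integrable_on UNIV" by (intro cs_integrable cs_Lw)
    then show "(\<lambda>x. c i * (\<phi> i x * exp (\<xi> \<bullet> x))) integrable_on UNIV" by (rule integrable_on_mult_right)
  qed
  also have "\<dots> = (\<Sum>i\<in>I. c i * Lap (\<phi> i) \<xi>)" unfolding Lap_def by simp
  finally show ?thesis .
qed

lemma Lap_Dop:
  assumes "cs R \<phi>" "finite J"
  shows "Lap (Dop J a \<phi>) \<xi> = Ecoef J a \<xi> * Lap \<phi> \<xi>"
proof -
  have "Lap (Dop J a \<phi>) \<xi> = Lap (\<lambda>x. \<Sum>B\<in>Pow J. (-1) ^ card B * (\<lambda>y. \<phi> (y + sum a B)) x) \<xi>"
    unfolding Dop_def[abs_def] by simp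
  also have "\<dots> = (\<Sum>B\<in>Pow J. (-1) ^ card B * Lap (\<lambda>y. \<phi> (y + sum a B)) \<xi>)"
    by (rule Lap_lin) (use cs_translate[OF assms(1)] assms(2) in auto)
  also have "\<dots> = Ecoef J a \<xi> * Lap \<phi> \<xi>"
    unfolding Ecoef_def Lap_translate[OF assms(1)] by (simp add: sum_distrib_left mult_ac)
  finally show ?thesis .
qed

lemma cont_Lap_param:
  assumes "cs R h"
  shows "continuous_on (UNIV \<times> cbox c d) (\<lambda>(\<xi>::real^2, x::real^2). h x * exp (\<xi> \<bullet> x))"
proof -
  have hc: "continuous_on UNIV h" using assms cs_def by blast
  have 1: "continuous_on (UNIV \<times> cbox c d) (\<lambda>p::((real^2) \<times> (real^2)). h (snd p))"
    by (rule continuous_on_compose2[OF hc continuous_on_snd]) auto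
  show ?thesis unfolding split_beta
    by (intro continuous_intros 1)
qed

lemma cont_Mop_param:
  assumes "cs R h"
  shows "continuous_on (cbox (a, c) (b, d)) (\<lambda>(x::real^2, t::real). h (x + t *\<^sub>R g) * exp (\<xi> \<bullet> x))"
proof -
  have hc: "continuous_on UNIV h" using assms cs_def by blast
  have 1: "continuous_on (cbox (a, c) (b, d)) (\<lambda>p::((real^2) \<times> real). h (fst p + snd p *\<^sub>R g))"
    by (rule continuous_on_compose2[OF hc]) (auto intro!: continuous_intros)
  show ?thesis unfolding split_beta
    by (intro continuous_intros 1)
qed

lemma Lap_cont:
  assumes "cs R h"
  shows "continuous_on UNIV (Lap h)"
proof -
  have "Lap h \<xi> = integral (bx R) (\<lambda>x. h x * exp (\<xi> \<bullet> x))" for \<xi>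
    unfolding Lap_def by (rule cs_integral[OF cs_Lw[OF assms] order_refl])
  moreover have "continuous_on UNIV (\<lambda>\<xi>. integral (bx R) (\<lambda>x. h x * exp (\<xi> \<bullet> x)))"
    unfolding bx_def
    by (rule integral_continuous_on_param, rule cont_Lap_param[OF assms])
  ultimately show ?thesis by simp
qed

lemma Lap_Mop:
  assumes "cs R h" "norm g = 1" "0 \<le> s"
  shows "Lap (Mop g s h) \<xi> = integral {0..s} (\<lambda>t. exp (- (t * (\<xi> \<bullet> g)))) * Lap h \<xi>"
proof -
  let ?B = "R + s"
  have R: "0 \<le> R" using assms cs_def by auto
  have "Lap (Mop g s h) \<xi> = integral (bx ?B) (\<lambda>x. Mop g s h x * exp (\<xi> \<bullet> x))"
    unfolding Lap_def by (rule cs_integral[OF cs_Lw[OF cs_Mop[OF assms]] order_refl])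
  also have "\<dots> = integral (bx ?B) (\<lambda>x. integral (cbox 0 s) (\<lambda>t. h (x + t *\<^sub>R g) * exp (\<xi> \<bullet> x)))"
    unfolding Mop_def by (simp add: cbox_interval)
  also have "\<dots> = integral (cbox 0 s) (\<lambda>t. integral (bx ?B) (\<lambda>x. h (x + t *\<^sub>R g) * exp (\<xi> \<bullet> x)))"
    unfolding bx_def
    by (rule integral_swap_continuous, rule cont_Mop_param[OF assms(1)])
  also have "\<dots> = integral (cbox 0 s) (\<lambda>t. exp (- (t * (\<xi> \<bullet> g))) * Lap h \<xi>)"
  proof (rule integral_cong)
    fix t assume t: "t \<in> cbox 0 s"
    have "integral (bx ?B) (\<lambda>x. h (x + t *\<^sub>R g) * exp (\<xi> \<bullet> x)) = Lap (\<lambda>x. h (x + t *\<^sub>R g)) \<xi>"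
      unfolding Lap_def 
      by (rule cs_integral[symmetric], rule cs_Lw, rule cs_translate[OF assms(1)]) (use t assms in \<open>auto simp: cbox_interval\<close>)
    also have "\<dots> = exp (- (t * (\<xi> \<bullet> g))) * Lap h \<xi>" by (simp add: Lap_translate[OF assms(1)])
    finally show "integral (bx ?B) (\<lambda>x. h (x + t *\<^sub>R g) * exp (\<xi> \<bullet> x)) = exp (- (t * (\<xi> \<bullet> g))) * Lap h \<xi>" .
  qed
  also have "\<dots> = integral {0..s} (\<lambda>t. exp (- (t * (\<xi> \<bullet> g)))) * Lap h \<xi>"
    by (simp add: cbox_interval)
  finally show ?thesis .
qed

lemma exp_integral:
  fixes k s :: real
  assumes "k \<noteq> 0" "0 \<le> s"
  shows "integral {0..s} (\<lambda>t. exp (- (t * k))) = (1 - exp (- (s * k))) / k"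
proof -
  define F where "F t = - exp (- (t * k)) / k" for t
  have "((\<lambda>t. exp (- (t * k))) has_integral (F s - F 0)) {0..s}"
    unfolding F_def
    by (rule fundamental_theorem_of_calculus[where f="\<lambda>t. - exp (- (t * k)) / k", OF assms(2)])
       (use assms in \<open>auto intro!: derivative_eq_intros simp: has_real_derivative_iff_has_vector_derivative[symmetric]\<close>)
  then show ?thesis by (simp add: integral_unique diff_divide_distrib F_def)
qed

lemma rpf_line:
  fixes F :: "real^2 \<Rightarrow> real"
  assumes "real_polynomial_function F"
  shows "\<exists>p. \<forall>t. F (\<xi> + t *\<^sub>R \<eta>) = poly p t"
  using assms
proof (induction F)
  case (linear f)
  then interpret bounded_linear f .
  have "f (\<xi> + t *\<^sub>R \<eta>) = poly [:f \<xi>, f \<eta>:] t" for t by (simp add: add scale)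
  then show ?case by blast
next
  case (const c)
  have "c = poly [:c:] t" for t by simp
  then show ?case by blast
next
  case (add f g)
  then obtain p q where "\<forall>t. f (\<xi> + t *\<^sub>R \<eta>) = poly p t" "\<forall>t. g (\<xi> + t *\<^sub>R \<eta>) = poly q t" by blast
  then have "\<forall>t. f (\<xi> + t *\<^sub>R \<eta>) + g (\<xi> + t *\<^sub>R \<eta>) = poly (p + q) t" by simp
  then show ?case by blast
next
  case (mult f g)
  then obtain p q where "\<forall>t. f (\<xi> + t *\<^sub>R \<eta>) = poly p t" "\<forall>t. g (\<xi> + t *\<^sub>R \<eta>) = poly q t" by blast
  then have "\<forall>t. f (\<xi> + t *\<^sub>R \<eta>) * g (\<xi> + t *\<^sub>R \<eta>) = poly (p * q) t" by simp
  then show ?case by blast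
qed

lemma density:
  fixes F G :: "real^2 \<Rightarrow> real"
  assumes F: "real_polynomial_function F" and F1: "F \<xi>1 \<noteq> 0"
    and G: "continuous_on UNIV G" and FG: "\<And>\<xi>. F \<xi> \<noteq> 0 \<Longrightarrow> G \<xi> = 0"
  shows "G \<xi>0 = 0"
proof -
  define \<eta> where "\<eta> = \<xi>1 - \<xi>0"
  obtain p where p: "\<And>t. F (\<xi>0 + t *\<^sub>R \<eta>) = poly p t" using rpf_line[OF F] by blast
  have "poly p 1 \<noteq> 0" using F1 p[of 1] by (simp add: \<eta>_def)
  then have "p \<noteq> 0" by auto
  then have fin: "finite {t. poly p t = 0}" by (rule poly_roots_finite)
  define Z where "Z = {t. poly p t = 0} \<inter> {0<..}"
  have finZ: "finite Z" using fin Z_def by auto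
  define e where "e = (if Z = {} then 1 else Min Z)"
  have e0: "0 < e" using finZ unfolding e_def Z_def by auto
  have nz: "poly p t \<noteq> 0" if "0 < t" "t < e" for t
  proof
    assume "poly p t = 0"
    then have "t \<in> Z" using that Z_def by auto
    then have "e \<le> t" unfolding e_def using finZ by auto
    then show False using that by auto
  qed
  define \<phi> where "\<phi> t = G (\<xi>0 + t *\<^sub>R \<eta>)" for t
  have cphi: "continuous_on UNIV \<phi>" unfolding \<phi>_def
    by (rule continuous_on_compose2[OF G]) (auto intro!: continuous_intros)
  have cl: "closed {t \<in> UNIV. \<phi> t = 0}"
    by (rule continuous_closed_preimage_constant[OF cphi closed_UNIV])
  have "{0<..<e} \<subseteq> {t \<in> UNIV. \<phi> t = 0}"
    using nz FG p unfolding \<phi>_def by auto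
  then have "closure {0<..<e} \<subseteq> {t \<in> UNIV. \<phi> t = 0}"
    by (rule closure_minimal[OF _ cl])
  moreover have "0 \<in> closure {0<..<e}" using e0 by simp
  ultimately have "\<phi> 0 = 0" by blast
  then show ?thesis unfolding \<phi>_def by simp
qed

lemma inner2: "(x::real^2) \<bullet> y = x$1 * y$1 + x$2 * y$2"
  by (simp add: inner_vec_def sum_2)

lemma perp1[simp]: "perp v $ 1 = - (v$2)" and perp2[simp]: "perp v $ 2 = v$1"
  unfolding perp_def by simp_all

lemma unit2: "norm (x::real^2) = 1 \<longleftrightarrow> (x$1)^2 + (x$2)^2 = 1"
  by (simp add: norm_eq_1 inner2 power2_eq_square)

lemma vec2_eq: "(x::real^2) = y \<longleftrightarrow> x$1 = y$1 \<and> x$2 = y$2"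
  by (simp add: vec_eq_iff forall_2)

lemma perp_orth:
  assumes u: "norm u = 1" and v: "norm v = 1" and o: "perp v \<bullet> u = 0"
  shows "u = v \<or> u = - v"
proof -
  have u': "(u$1)^2 + (u$2)^2 = 1" and v': "(v$1)^2 + (v$2)^2 = 1" using u v unit2 by auto
  have o': "u$1 * v$2 = u$2 * v$1" using o by (simp add: inner2 algebra_simps)
  define l where "l = u$1 * v$1 + u$2 * v$2"
  have e1: "u$1 = l * v$1" unfolding l_def using v' o' by algebra
  have e2: "u$2 = l * v$2" unfolding l_def using v' o' by algebra
  have "l^2 = 1" using u' v' e1 e2
    by (metis (no_types, lifting) distrib_left mult.right_neutral power_mult_distrib)
  then have "l = 1 \<or> l = -1" by (simp add: power2_eq_1_iff)
  then show ?thesis using e1 e2 by (auto simp: vec2_eq)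
qed

lemma perp_self: "perp v \<bullet> v = 0"
  by (simp add: inner2)

lemma unit_nonzero: "norm (x::real^2) = 1 \<Longrightarrow> x \<noteq> 0" by auto

lemma unit_neg_ne: 
  assumes "norm (x::real^2) = 1" shows "x \<noteq> - x"
proof
  assume "x = - x"
  then have "x = 0" by (simp add: vec2_eq)
  then show False using assms by simp
qed

definition Aa :: "nat \<Rightarrow> (nat \<Rightarrow> real^2) \<Rightarrow> (nat \<Rightarrow> real) \<Rightarrow> real^2 \<Rightarrow> real" where
  "Aa m g a \<xi> = (\<Sum>i<m. a i * (\<Prod>j\<in>{..<m} - {i}. \<xi> \<bullet> g j))"

definition Qp :: "nat \<Rightarrow> (nat \<Rightarrow> real^2) \<Rightarrow> real^2 \<Rightarrow> real" where
  "Qp m g \<xi> = (\<Prod>j<m. \<xi> \<bullet> g j)"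

lemma rpf_inner: "real_polynomial_function (\<lambda>\<xi>::real^2. \<xi> \<bullet> v)"
  by (intro real_polynomial_function.intros(1) bounded_linear_inner_left)

lemma Aa_rpf: "real_polynomial_function (Aa m g a)"
  unfolding Aa_def[abs_def]
  by (intro real_polynomial_function_sum real_polynomial_function.intros(4) real_polynomial_function.intros(2)
      real_polynomial_function_prod rpf_inner) auto

lemma Qp_rpf: "real_polynomial_function (Qp m g)"
  unfolding Qp_def[abs_def]
  by (intro real_polynomial_function_prod rpf_inner) auto

lemma rpf_cont: "real_polynomial_function f \<Longrightarrow> continuous_on S f"
  by (simp add: continuous_at_imp_continuous_on continuous_real_polymonial_function)

lemma not_perp:
  assumes units: "\<forall>i<m. norm (g i) = 1" and inj: "inj_on g {..<m}"
    and j: "j < m" "i0 < m" "j \<noteq> i0" "g j \<noteq> - g i0"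
  shows "perp (g i0) \<bullet> g j \<noteq> 0"
proof
  assume "perp (g i0) \<bullet> g j = 0"
  then have "g j = g i0 \<or> g j = - g i0" using perp_orth units j by blast
  then show False using j inj unfolding inj_on_def by blast
qed

lemma pair_none:
  assumes A: "\<And>\<xi>. Aa m g a \<xi> = 0" and units: "\<forall>i<m. norm (g i) = 1" and inj: "inj_on g {..<m}"
    and i0: "i0 < m" and np: "\<forall>i<m. g i \<noteq> - g i0"
  shows "a i0 = 0"
proof -
  define \<xi>0 where "\<xi>0 = perp (g i0)"
  have L0: "\<xi>0 \<bullet> g i0 = 0" unfolding \<xi>0_def by (rule perp_self)
  have nz: "(\<Prod>j\<in>{..<m} - {i0}. \<xi>0 \<bullet> g j) \<noteq> 0"
    using not_perp[OF units inj] np i0 unfolding \<xi>0_def by (auto simp: prod_zero_iff)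
  have z: "(\<Prod>j\<in>{..<m} - {i}. \<xi>0 \<bullet> g j) = 0" if "i \<in> {..<m} - {i0}" for i
    using that i0 L0 by (auto simp: prod_zero_iff intro!: bexI[of _ i0])
  have "Aa m g a \<xi>0 = a i0 * (\<Prod>j\<in>{..<m} - {i0}. \<xi>0 \<bullet> g j) + (\<Sum>i\<in>{..<m} - {i0}. a i * (\<Prod>j\<in>{..<m} - {i}. \<xi>0 \<bullet> g j))"
    unfolding Aa_def using i0 by (subst sum.remove[of _ i0]) auto
  also have "(\<Sum>i\<in>{..<m} - {i0}. a i * (\<Prod>j\<in>{..<m} - {i}. \<xi>0 \<bullet> g j)) = 0"
    using z by (intro sum.neutral) auto
  finally show ?thesis using A nz by simp
qed

lemma pair_some:
  assumes A: "\<And>\<xi>. Aa m g a \<xi> = 0" and units: "\<forall>i<m. norm (g i) = 1" and inj: "inj_on g {..<m}"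
    and i0: "i0 < m" and i1: "i1 < m" and neg: "g i1 = - g i0"
  shows "a i1 = a i0"
proof -
  have ne: "i0 \<noteq> i1" using neg unit_neg_ne units i0 by metis
  define I' where "I' = {..<m} - {i0, i1}"
  define R where "R \<xi> = (\<Prod>j\<in>I'. \<xi> \<bullet> g j)" for \<xi>
  define S where "S \<xi> = (\<Sum>i\<in>I'. a i * (\<Prod>j\<in>I' - {i}. \<xi> \<bullet> g j))" for \<xi>
  have finI': "finite I'" unfolding I'_def by auto
  have I: "{..<m} = insert i0 (insert i1 I')" unfolding I'_def using i0 i1 by auto
  have nI: "i0 \<notin> insert i1 I'" "i1 \<notin> I'" using ne unfolding I'_def by auto
  have d1: "{..<m} - {i0} = insert i1 I'" using I nI by auto
  have d2: "{..<m} - {i1} = insert i0 I'" using I nI ne by auto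
  have d3: "{..<m} - {i} = insert i0 (insert i1 (I' - {i}))" if "i \<in> I'" for i
    using that I nI by auto
  have dec: "Aa m g a \<xi> = (\<xi> \<bullet> g i0) * ((a i1 - a i0) * R \<xi> - (\<xi> \<bullet> g i0) * S \<xi>)" for \<xi>
  proof -
    have "Aa m g a \<xi> = a i0 * (\<Prod>j\<in>{..<m} - {i0}. \<xi> \<bullet> g j) + (a i1 * (\<Prod>j\<in>{..<m} - {i1}. \<xi> \<bullet> g j)
        + (\<Sum>i\<in>I'. a i * (\<Prod>j\<in>{..<m} - {i}. \<xi> \<bullet> g j)))"
      unfolding Aa_def lessThan_def[symmetric] I using finI' nI by simp
    also have "(\<Prod>j\<in>{..<m} - {i0}. \<xi> \<bullet> g j) = - (\<xi> \<bullet> g i0) * R \<xi>"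
      unfolding d1 R_def using finI' nI neg by simp
    also have "(\<Prod>j\<in>{..<m} - {i1}. \<xi> \<bullet> g j) = (\<xi> \<bullet> g i0) * R \<xi>"
      unfolding d2 R_def using finI' nI ne by (simp add: I'_def)
    also have "(\<Sum>i\<in>I'. a i * (\<Prod>j\<in>{..<m} - {i}. \<xi> \<bullet> g j)) = (\<Sum>i\<in>I'. - ((\<xi> \<bullet> g i0) * (\<xi> \<bullet> g i0)) * (a i * (\<Prod>j\<in>I' - {i}. \<xi> \<bullet> g j)))"
    proof (rule sum.cong[OF refl])
      fix i assume i: "i \<in> I'"
      have "i0 \<notin> insert i1 (I' - {i})" "i1 \<notin> I' - {i}" using nI by auto
      then show "a i * (\<Prod>j\<in>{..<m} - {i}. \<xi> \<bullet> g j) = - ((\<xi> \<bullet> g i0) * (\<xi> \<bullet> g i0)) * (a i * (\<Prod>j\<in>I' - {i}. \<xi> \<bullet> g j))"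
        unfolding d3[OF i] using finI' neg by simp
    qed
    also have "\<dots> = - ((\<xi> \<bullet> g i0) * (\<xi> \<bullet> g i0)) * S \<xi>" unfolding S_def by (simp add: sum_distrib_left)
    finally show ?thesis by (simp add: algebra_simps)
  qed
  define G where "G \<xi> = (a i1 - a i0) * R \<xi> - (\<xi> \<bullet> g i0) * S \<xi>" for \<xi>
  have Grpf: "real_polynomial_function G"
    unfolding G_def[abs_def] R_def[abs_def] S_def[abs_def]
    by (intro real_polynomial_function_sum real_polynomial_function.intros(4) real_polynomial_function.intros(2)
      real_polynomial_function_prod rpf_inner real_polynomial_function_diff finI') (auto simp: finI')
  have "g i0 \<bullet> g i0 = 1" using units i0 norm_eq_1 by blast
  then have "G (perp (g i0)) = 0"
    using density[OF rpf_inner[of "g i0"], of "g i0" G "perp (g i0)"] rpf_cont[OF Grpf] A dec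
    by (simp add: G_def[symmetric]) blast
  then have "(a i1 - a i0) * R (perp (g i0)) = 0" unfolding G_def by (simp add: perp_self)
  moreover have "R (perp (g i0)) \<noteq> 0"
  proof -
    have "perp (g i0) \<bullet> g j \<noteq> 0" if "j \<in> I'" for j
    proof (rule not_perp[OF units inj])
      show "j < m" "i0 < m" "j \<noteq> i0" using that i0 I'_def by auto
      show "g j \<noteq> - g i0" using that inj i1 neg unfolding I'_def inj_on_def by auto
    qed
    then show ?thesis unfolding R_def using finI' by (auto simp: prod_zero_iff)
  qed
  ultimately show ?thesis by simp
qed

lemma build_symmetric:
  assumes units: "\<forall>i<m. norm (g i) = 1" and inj: "inj_on g {..<m}" and m: "m \<ge> 1"
    and partner: "\<forall>i<m. \<exists>i'<m. g i' = - g i \<and> c i' = - c i"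
  shows "star_symmetric m g c"
proof -
  define \<sigma> where "\<sigma> i = (THE i'. i' < m \<and> g i' = - g i)" for i
  have \<sigma>: "\<sigma> i < m \<and> g (\<sigma> i) = - g i \<and> c (\<sigma> i) = - c i" if im: "i < m" for i
  proof -
    obtain i' where i': "i' < m" "g i' = - g i" "c i' = - c i" using partner im by blast
    have "\<sigma> i = i'" unfolding \<sigma>_def
      by (rule the_equality) (use i' inj in \<open>auto simp: inj_on_def\<close>)
    then show ?thesis using i' by simp
  qed
  have \<sigma>\<sigma>: "\<sigma> (\<sigma> i) = i" if "i < m" for i
  proof -
    have "g (\<sigma> (\<sigma> i)) = g i" using \<sigma>[OF that] \<sigma>[of "\<sigma> i"] by simp
    then show ?thesis using inj \<sigma>[OF that] \<sigma>[of "\<sigma> i"] that unfolding inj_on_def by blast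
  qed
  have \<sigma>ne: "\<sigma> i \<noteq> i" if "i < m" for i
    using \<sigma>[OF that] unit_neg_ne units that by metis
  define T where "T = {i. i < m \<and> i < \<sigma> i}"
  have finT: "finite T" unfolding T_def by auto
  have Tsub: "T \<subseteq> {..<m}" unfolding T_def by auto
  have sTsub: "\<sigma> ` T \<subseteq> {..<m}" using \<sigma> unfolding T_def by auto
  have cover: "{..<m} = T \<union> \<sigma> ` T"
  proof
    show "{..<m} \<subseteq> T \<union> \<sigma> ` T"
    proof
      fix i assume "i \<in> {..<m}"
      then have i: "i < m" by simp
      show "i \<in> T \<union> \<sigma> ` T"
      proof (cases "i < \<sigma> i")
        case True then show ?thesis using i T_def by auto
      next
        case False
        then have "\<sigma> i < i" using \<sigma>ne[OF i] by auto
        then have "\<sigma> i \<in> T" using \<sigma>\<sigma>[OF i] \<sigma>[OF i] unfolding T_def by auto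
        moreover have "i = \<sigma> (\<sigma> i)" using \<sigma>\<sigma>[OF i] by simp
        ultimately show ?thesis by blast
      qed
    qed
  qed (use Tsub sTsub in auto)
  have disj: "T \<inter> \<sigma> ` T = {}"
  proof (rule ccontr)
    assume "T \<inter> \<sigma> ` T \<noteq> {}"
    then obtain j where j: "j \<in> T" "\<sigma> j \<in> T" by auto
    then have "j < \<sigma> j" "\<sigma> j < \<sigma> (\<sigma> j)" unfolding T_def by auto
    then show False using \<sigma>\<sigma> j unfolding T_def by auto
  qed
  have injs: "inj_on \<sigma> T" unfolding inj_on_def using \<sigma>\<sigma> T_def by (metis mem_Collect_eq)
  define k where "k = card T"
  have mk: "m = 2 * k"
  proof -
    have "m = card (T \<union> \<sigma> ` T)" using cover by (metis card_lessThan)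
    also have "\<dots> = card T + card (\<sigma> ` T)" using disj finT by (simp add: card_Un_disjoint)
    also have "card (\<sigma> ` T) = card T" using injs by (simp add: card_image)
    finally show ?thesis unfolding k_def by simp
  qed
  have k1: "k \<ge> 1" using mk m by auto
  obtain e where e: "bij_betw e {0..<k} T" using ex_bij_betw_nat_finite[OF finT] k_def by blast
  define p where "p i = (if i < k then e i else if i < 2 * k then \<sigma> (e (i - k)) else i)" for i
  have pT: "p i \<in> T" if "i < k" for i using e that unfolding p_def bij_betw_def by auto
  have psT: "p i \<in> \<sigma> ` T" if "k \<le> i" "i < 2 * k" for i
    using e that unfolding p_def bij_betw_def by auto
  have injp: "inj_on p {..<m}"
  proof (rule inj_onI)
    fix i j assume i: "i \<in> {..<m}" and j: "j \<in> {..<m}" and eq: "p i = p j"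
    consider "i < k" "j < k" | "i < k" "k \<le> j" | "k \<le> i" "j < k" | "k \<le> i" "k \<le> j" by linarith
    then show "i = j"
    proof cases
      case 1 then show ?thesis using eq e unfolding p_def bij_betw_def inj_on_def by auto
    next
      case 2 then show ?thesis using pT[of i] psT[of j] eq disj i j mk by auto
    next
      case 3 then show ?thesis using pT[of j] psT[of i] eq disj i j mk by auto
    next
      case 4
      then have "e (i - k) \<in> T" "e (j - k) \<in> T" using e i j mk unfolding bij_betw_def by auto
      moreover have "\<sigma> (e (i - k)) = \<sigma> (e (j - k))" using eq 4 i j mk unfolding p_def by auto
      ultimately have "e (i - k) = e (j - k)" using injs unfolding inj_on_def by blast
      then have "i - k = j - k" using e 4 i j mk unfolding bij_betw_def inj_on_def by auto
      then show ?thesis using 4 by auto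
    qed
  qed
  have pim: "p ` {..<m} \<subseteq> {..<m}"
  proof
    fix y assume "y \<in> p ` {..<m}"
    then obtain i where i: "i < m" "y = p i" by auto
    show "y \<in> {..<m}"
    proof (cases "i < k")
      case True then show ?thesis using pT Tsub i by auto
    next
      case False then show ?thesis using psT[of i] sTsub i mk by auto
    qed
  qed
  have "p ` {..<m} = {..<m}" by (rule endo_inj_surj[OF _ pim injp]) auto
  then have "bij_betw p {..<m} {..<m}" using injp unfolding bij_betw_def by auto
  moreover have "p x = x" if "x \<notin> {..<m}" for x using that mk unfolding p_def by auto
  ultimately have perm: "p permutes {..<m}" by (rule bij_imp_permutes)
  have "g (p i) = - g (p (k + i)) \<and> c (p i) = - c (p (k + i))" if "i < k" for i
  proof -
    have "e i \<in> T" using e that unfolding bij_betw_def by auto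
    then have "e i < m" using Tsub by auto
    moreover have "p i = e i" "p (k + i) = \<sigma> (e i)" using that unfolding p_def by auto
    ultimately show ?thesis using \<sigma>[of "e i"] by simp
  qed
  then show ?thesis unfolding star_symmetric_def using k1 mk perm by blast
qed

lemma exists_Qp_nz:
  assumes units: "\<forall>i<m. norm (g i) = 1"
  shows "\<exists>\<xi>. Qp m g \<xi> \<noteq> 0"
proof -
  define Bad where "Bad = (\<Union>j<m. {n::nat. g j $ 1 + real n * g j $ 2 = 0})"
  have "finite {n::nat. g j $ 1 + real n * g j $ 2 = 0}" if j: "j < m" for j
  proof (cases "g j $ 2 = 0")
    case True
    then have "g j $ 1 \<noteq> 0" using units j unit2 by force
    then show ?thesis using True by simp
  next
    case False
    have "{n::nat. g j $ 1 + real n * g j $ 2 = 0} \<subseteq> real -` {- (g j $ 1) / g j $ 2}"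
      using False by (auto simp: field_simps)
    moreover have "finite (real -` {- (g j $ 1) / g j $ 2})"
      by (rule finite_vimageI) (auto simp: inj_on_def)
    ultimately show ?thesis by (rule finite_subset)
  qed
  then have "finite Bad" unfolding Bad_def by auto
  then obtain n where n: "n \<notin> Bad" using ex_new_if_finite[OF infinite_UNIV_nat] by blast
  define \<xi> where "\<xi> = (vector [1, real n] :: real^2)"
  have "\<xi> \<bullet> g j \<noteq> 0" if "j < m" for j
    using n that unfolding Bad_def \<xi>_def by (auto simp: inner2)
  then have "Qp m g \<xi> \<noteq> 0" unfolding Qp_def by (auto simp: prod_zero_iff)
  then show ?thesis by blast
qed

lemma exists_good:
  assumes units: "\<forall>i<m. norm (g i) = 1" and inj: "inj_on g {..<m}" and m: "m \<ge> 1"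
    and cnz: "\<forall>i<m. c i \<noteq> 0" and ns: "\<not> star_symmetric m g c"
  shows "\<exists>\<xi>. Qp m g \<xi> * ((Aa m g (\<lambda>i. c i * g i $ 1) \<xi>)^2 + (Aa m g (\<lambda>i. c i * g i $ 2) \<xi>)^2) \<noteq> 0"
proof (rule ccontr)
  let ?a1 = "\<lambda>i. c i * g i $ 1" and ?a2 = "\<lambda>i. c i * g i $ 2"
  assume "\<not> ?thesis"
  then have Z: "\<And>\<xi>. Qp m g \<xi> * ((Aa m g ?a1 \<xi>)^2 + (Aa m g ?a2 \<xi>)^2) = 0" by blast
  obtain \<xi>g where \<xi>g: "Qp m g \<xi>g \<noteq> 0" using exists_Qp_nz[OF units] by blast
  have A1: "Aa m g ?a1 \<xi> = 0" for \<xi>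
    by (rule density[OF Qp_rpf \<xi>g rpf_cont[OF Aa_rpf]]) (use Z in \<open>simp add: sum_squares_eq_zero_iff; blast\<close>)
  have A2: "Aa m g ?a2 \<xi> = 0" for \<xi>
    by (rule density[OF Qp_rpf \<xi>g rpf_cont[OF Aa_rpf]]) (use Z in \<open>simp add: sum_squares_eq_zero_iff; blast\<close>)
  have "\<forall>i<m. \<exists>i'<m. g i' = - g i \<and> c i' = - c i"
  proof (intro allI impI)
    fix i assume i: "i < m"
    show "\<exists>i'<m. g i' = - g i \<and> c i' = - c i"
    proof (cases "\<exists>i'<m. g i' = - g i")
      case True
      then obtain i' where i': "i' < m" "g i' = - g i" by blast
      have e1: "c i' * g i' $ 1 = c i * g i $ 1" using pair_some[OF A1 units inj i i'] .
      have e2: "c i' * g i' $ 2 = c i * g i $ 2" using pair_some[OF A2 units inj i i'] .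
      have "g i $ 1 \<noteq> 0 \<or> g i $ 2 \<noteq> 0" using units i unit2 by force
      moreover have "(c i' + c i) * g i $ 1 = 0" using e1 i'(2) by (simp add: algebra_simps)
      moreover have "(c i' + c i) * g i $ 2 = 0" using e2 i'(2) by (simp add: algebra_simps)
      ultimately have "c i' + c i = 0" by auto
      then have "c i' = - c i" by linarith
      then show ?thesis using i' by blast
    next
      case False
      then have np: "\<forall>i'<m. g i' \<noteq> - g i" by blast
      have "c i * g i $ 1 = 0" using pair_none[OF A1 units inj i np] .
      moreover have "c i * g i $ 2 = 0" using pair_none[OF A2 units inj i np] .
      ultimately have "g i $ 1 = 0" "g i $ 2 = 0" using cnz i by auto
      then show ?thesis using units i unit2 by force
    qed
  qed
  then have "star_symmetric m g c" using build_symmetric[OF units inj m] by blast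
  then show False using ns by blast
qed

lemma C2_cont: 
  assumes "C2 h" shows "continuous_on S h"
proof -
  have "h differentiable (at x)" for x using assms unfolding C2_def by blast
  then have "continuous (at x) h" for x by (rule differentiable_imp_continuous_within)
  then show ?thesis by (simp add: continuous_at_imp_continuous_on)
qed

lemma C2c_cs:
  assumes "0 < r" "C2c_disc r h"
  shows "cs r h"
  unfolding cs_def
proof (intro conjI allI impI)
  show "continuous_on UNIV h" using assms(2) unfolding C2c_disc_def by (intro C2_cont) simp
  show "0 \<le> r" using assms by simp
  fix x :: "real^2" assume x: "r \<le> norm x"
  show "h x = 0"
  proof (rule ccontr)
    assume "h x \<noteq> 0"
    then have "x \<in> {x. h x \<noteq> 0}" by simp
    then have "x \<in> support h" unfolding support_def using closure_subset by (rule subsetD[rotated])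
    moreover have "support h \<subseteq> ball 0 r" using assms(2) unfolding C2c_disc_def by simp
    ultimately have "x \<in> ball 0 r" by (rule subsetD[rotated])
    then show False using x by simp
  qed
qed

lemma adm_cs: "0 < r \<Longrightarrow> admissible_field r f \<Longrightarrow> cs r (\<lambda>x. f x $ k)"
  unfolding admissible_field_def using C2c_cs by blast

lemma cs_inner:
  fixes f :: "real^2 \<Rightarrow> real^2"
  assumes "cs R (\<lambda>x. f x $ 1)" "cs R (\<lambda>x. f x $ 2)"
  shows "cs R (\<lambda>x. f x \<bullet> v)"
proof -
  have "cs R (\<lambda>x. f x $ 1 * v $ 1 + f x $ 2 * v $ 2)"
    using assms by (intro cs_add cs_multc)
  then show ?thesis by (simp add: inner2)
qed

lemma star_comp1: "star_transform m g c f x $ 1 = (\<Sum>i<m. c i * ray_transform (g i) (\<lambda>y. f y \<bullet> g i) x)"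
  unfolding star_transform_def by simp

lemma star_comp2: "star_transform m g c f x $ 2 = (\<Sum>i<m. c i * ray_transform (g i) (\<lambda>y. f y \<bullet> perp (g i)) x)"
  unfolding star_transform_def by simp

lemma Lap_zero: "Lap (\<lambda>x. 0) \<xi> = 0"
  unfolding Lap_def by simp

lemma Lap_lin2:
  assumes "cs R p" "cs R q"
  shows "Lap (\<lambda>x. \<alpha> * p x + \<beta> * q x) \<xi> = \<alpha> * Lap p \<xi> + \<beta> * Lap q \<xi>"
proof -
  have "Lap (\<lambda>x. \<alpha> * p x + \<beta> * q x) \<xi> = Lap (\<lambda>x. \<Sum>i\<in>{0::nat,1}. (if i = 0 then \<alpha> else \<beta>) * (if i = 0 then p else q) x) \<xi>"
    by simp
  also have "\<dots> = (\<Sum>i\<in>{0::nat,1}. (if i = 0 then \<alpha> else \<beta>) * Lap (if i = 0 then p else q) \<xi>)"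
    by (rule Lap_lin) (use assms in auto)
  finally show ?thesis by simp
qed

lemma key_identity:
  assumes units: "\<forall>i<m. norm (g i) = 1" and u: "\<And>i. i < m \<Longrightarrow> cs R (u i)"
    and Z: "\<And>x. (\<Sum>i<m. c i * ray_transform (g i) (u i) x) = 0"
  shows "(\<Sum>i<m. c i * (Ecoef ({..<m} - {i}) g \<xi> * integral {0..1} (\<lambda>t. exp (- (t * (\<xi> \<bullet> g i))))) * Lap (u i) \<xi>) = 0"
proof -
  define W where "W x = (\<Sum>i<m. c i * Dop ({..<m} - {i}) g (Mop (g i) 1 (u i)) x)" for x
  have W0: "W x = 0" for x
  proof -
    have "Dop {..<m} g (\<lambda>y. \<Sum>i<m. c i * ray_transform (g i) (u i) y) x = Dop {..<m} g (\<lambda>y. 0) x"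
      by (rule Dop_cong) (rule Z)
    then have "0 = Dop {..<m} g (\<lambda>y. \<Sum>i<m. c i * ray_transform (g i) (u i) y) x"
      unfolding Dop_def by simp
    also have "\<dots> = (\<Sum>i<m. c i * Dop {..<m} g (ray_transform (g i) (u i)) x)"
      by (rule Dop_lin)
    also have "\<dots> = W x" unfolding W_def
    proof (rule sum.cong[OF refl])
      fix i assume i: "i \<in> {..<m}"
      have "Dop {..<m} g (ray_transform (g i) (u i)) x
          = Dop ({..<m} - {i}) g (\<lambda>y. ray_transform (g i) (u i) y - ray_transform (g i) (u i) (y + g i)) x"
        by (rule Dop_remove) (use i in auto)
      also have "\<dots> = Dop ({..<m} - {i}) g (Mop (g i) 1 (u i)) x"
      proof (rule Dop_cong)
        fix y
        have ui: "cs R (u i)" using u i by simp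
        have n: "norm (g i) = 1" using units i by simp
        have "ray_transform (g i) (u i) y - ray_transform (g i) (u i) (y + 1 *\<^sub>R g i) = Mop (g i) 1 (u i) y"
          by (rule delta_ray[OF ui n zero_le_one])
        then show "ray_transform (g i) (u i) y - ray_transform (g i) (u i) (y + g i) = Mop (g i) 1 (u i) y"
          by simp
      qed
      finally show "c i * Dop {..<m} g (ray_transform (g i) (u i)) x = c i * Dop ({..<m} - {i}) g (Mop (g i) 1 (u i)) x"
        by simp
    qed
    finally show ?thesis by simp
  qed
  have "W = (\<lambda>x. 0)" using W0 by (rule ext)
  then have "Lap W \<xi> = 0" using Lap_zero by simp
  moreover have "Lap W \<xi> = (\<Sum>i<m. c i * Lap (Dop ({..<m} - {i}) g (Mop (g i) 1 (u i))) \<xi>)"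
    unfolding W_def[abs_def]
  proof (rule Lap_lin)
    fix i assume i: "i \<in> {..<m}"
    have ui: "cs R (u i)" using u i by simp
    have n: "norm (g i) = 1" using units i by simp
    have "cs (R + 1 + (\<Sum>j\<in>{..<m} - {i}. norm (g j))) (Dop ({..<m} - {i}) g (Mop (g i) 1 (u i)))"
      by (rule cs_Dop[OF cs_Mop[OF ui n zero_le_one]]) simp
    then show "\<exists>R. cs R (Dop ({..<m} - {i}) g (Mop (g i) 1 (u i)))" by blast
  qed simp
  moreover have "(\<Sum>i<m. c i * Lap (Dop ({..<m} - {i}) g (Mop (g i) 1 (u i))) \<xi>) = 
     (\<Sum>i<m. c i * (Ecoef ({..<m} - {i}) g \<xi> * integral {0..1} (\<lambda>t. exp (- (t * (\<xi> \<bullet> g i))))) * Lap (u i) \<xi>)"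
  proof (rule sum.cong[OF refl])
    fix i assume i: "i \<in> {..<m}"
    have ui: "cs R (u i)" using u i by simp
    have n: "norm (g i) = 1" using units i by simp
    have "Lap (Dop ({..<m} - {i}) g (Mop (g i) 1 (u i))) \<xi> = Ecoef ({..<m} - {i}) g \<xi> * Lap (Mop (g i) 1 (u i)) \<xi>"
      by (rule Lap_Dop[OF cs_Mop[OF ui n zero_le_one]]) simp
    also have "Lap (Mop (g i) 1 (u i)) \<xi> = integral {0..1} (\<lambda>t. exp (- (t * (\<xi> \<bullet> g i)))) * Lap (u i) \<xi>"
      by (rule Lap_Mop[OF ui n zero_le_one])
    finally show "c i * Lap (Dop ({..<m} - {i}) g (Mop (g i) 1 (u i))) \<xi> = c i * (Ecoef ({..<m} - {i}) g \<xi> * integral {0..1} (\<lambda>t. exp (- (t * (\<xi> \<bullet> g i))))) * Lap (u i) \<xi>"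
      by (simp add: mult.assoc)
  qed
  ultimately show ?thesis by simp
qed

definition ev :: "(real \<times> (real^2)) list \<Rightarrow> real^2 \<Rightarrow> real" where
  "ev L x = sum_list (map (\<lambda>(a, \<xi>). a * exp (\<xi> \<bullet> x)) L)"

lemma ev_Nil[simp]: "ev [] x = 0" unfolding ev_def by simp
lemma ev_Cons[simp]: "ev ((a, \<xi>) # L) x = a * exp (\<xi> \<bullet> x) + ev L x" unfolding ev_def by simp
lemma ev_append[simp]: "ev (L1 @ L2) x = ev L1 x + ev L2 x" unfolding ev_def by simp

definition pmul :: "(real \<times> (real^2)) list \<Rightarrow> (real \<times> (real^2)) list \<Rightarrow> (real \<times> (real^2)) list" where
  "pmul L1 L2 = concat (map (\<lambda>(a, \<xi>). map (\<lambda>(b, \<eta>). (a * b, \<xi> + \<eta>)) L2) L1)"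

lemma ev_map: "ev (map (\<lambda>(b, \<eta>). (a * b, \<xi> + \<eta>)) L2) x = a * exp (\<xi> \<bullet> x) * ev L2 x"
proof (induction L2)
  case Nil then show ?case by simp
next
  case (Cons p L2)
  obtain b \<eta> where p: "p = (b, \<eta>)" by (cases p)
  show ?case using Cons by (simp add: p inner_add_left exp_add algebra_simps)
qed

lemma ev_pmul: "ev (pmul L1 L2) x = ev L1 x * ev L2 x"
proof (induction L1)
  case Nil then show ?case by (simp add: pmul_def)
next
  case (Cons p L1)
  obtain a \<xi> where p: "p = (a, \<xi>)" by (cases p)
  have "pmul (p # L1) L2 = map (\<lambda>(b, \<eta>). (a * b, \<xi> + \<eta>)) L2 @ pmul L1 L2"
    by (simp add: pmul_def p)
  then show ?case using Cons by (simp add: p ev_map distrib_right)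
qed

lemma ev_cont: "continuous_on S (ev L)"
proof (induction L)
  case Nil then show ?case by (simp add: ev_def)
next
  case (Cons p L)
  obtain a \<xi> where p: "p = (a, \<xi>)" by (cases p)
  have e: "ev (p # L) = (\<lambda>x. a * exp (\<xi> \<bullet> x) + ev L x)" by (rule ext) (simp add: p)
  show ?case unfolding e by (intro continuous_intros Cons)
qed

lemma int_ev:
  assumes h: "cs R h" and L: "\<And>\<xi>. Lap h \<xi> = 0"
  shows "integral UNIV (\<lambda>x. h x * ev L x) = 0"
proof (induction L)
  case Nil then show ?case by simp
next
  case (Cons p L)
  obtain a \<xi> where p: "p = (a, \<xi>)" by (cases p)
  have i1: "(\<lambda>x. a * (h x * exp (\<xi> \<bullet> x))) integrable_on UNIV"
    by (intro integrable_on_mult_right cs_integrable[OF cs_Lw[OF h]])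
  have i2: "(\<lambda>x. h x * ev L x) integrable_on UNIV"
    by (rule cs_integrable, rule cs_mult_cont[OF h ev_cont])
  have "integral UNIV (\<lambda>x. h x * ev (p # L) x) = integral UNIV (\<lambda>x. a * (h x * exp (\<xi> \<bullet> x)) + h x * ev L x)"
    by (simp add: p algebra_simps)
  also have "\<dots> = a * Lap h \<xi> + integral UNIV (\<lambda>x. h x * ev L x)"
    using integral_add[OF i1 i2] by (simp add: Lap_def)
  finally show ?case using Cons L by simp
qed

lemma Lap_unique:
  assumes h: "cs R h" and L: "\<And>\<xi>. Lap h \<xi> = 0"
  shows "h x = 0"
proof -
  define B where "B = R + 1"
  have R0: "0 \<le> R" using h cs_def by blast
  have B: "R \<le> B" "0 < B" unfolding B_def using R0 by auto
  define S where "S = bx B"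
  interpret PR: function_ring_on "{f. \<exists>L. f = ev L}" S
  proof unfold_locales
    show "compact S" unfolding S_def bx_def by simp
    show "continuous_on S f" if "f \<in> {f. \<exists>L. f = ev L}" for f using that ev_cont by auto
    show "(\<lambda>x. f x + g x) \<in> {f. \<exists>L. f = ev L}" if fg: "f \<in> {f. \<exists>L. f = ev L}" "g \<in> {f. \<exists>L. f = ev L}" for f g
    proof -
      obtain L1 L2 where "f = ev L1" "g = ev L2" using fg by auto
      then have "(\<lambda>x. f x + g x) = ev (L1 @ L2)" by (auto simp: fun_eq_iff)
      then show ?thesis by blast
    qed
    show "(\<lambda>x. f x * g x) \<in> {f. \<exists>L. f = ev L}" if fg: "f \<in> {f. \<exists>L. f = ev L}" "g \<in> {f. \<exists>L. f = ev L}" for f g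
    proof -
      obtain L1 L2 where "f = ev L1" "g = ev L2" using fg by auto
      then have "(\<lambda>x. f x * g x) = ev (pmul L1 L2)" by (auto simp: fun_eq_iff ev_pmul)
      then show ?thesis by blast
    qed
    show "(\<lambda>_. c) \<in> {f. \<exists>L. f = ev L}" for c
    proof -
      have "(\<lambda>_. c) = ev [(c, 0)]" by (auto simp: fun_eq_iff)
      then show ?thesis by blast
    qed
    show "\<exists>f\<in>{f. \<exists>L. f = ev L}. f x \<noteq> f y" if "x \<noteq> y" for x y
    proof -
      have "(x - y) \<bullet> x \<noteq> (x - y) \<bullet> y"
      proof
        assume "(x - y) \<bullet> x = (x - y) \<bullet> y"
        then have "(x - y) \<bullet> (x - y) = 0" by (simp add: inner_diff_right)
        then show False using that by simp
      qed
      then have "ev [(1, x - y)] x \<noteq> ev [(1, x - y)] y" by simp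
      then show ?thesis by blast
    qed
  qed
  have hc: "continuous_on S h" using h cs_cont by blast
  let ?I = "integral S (\<lambda>x. h x * h x)"
  let ?M = "integral S (\<lambda>x. \<bar>h x\<bar>)"
  have intS: "f integrable_on S" if "continuous_on S f" for f :: "real^2 \<Rightarrow> real"
    using that unfolding S_def bx_def by (rule integrable_continuous)
  have M0: "0 \<le> ?M" by (rule integral_nonneg) (auto intro!: intS continuous_intros hc)
  have I0: "0 \<le> ?I" by (rule integral_nonneg) (auto intro!: intS continuous_intros hc)
  have Ile: "?I \<le> e * ?M" if e: "0 < e" for e
  proof -
    obtain f where f: "f \<in> {f. \<exists>L. f = ev L}" and fe: "\<forall>x\<in>S. \<bar>h x - f x\<bar> < e"
      using PR.Stone_Weierstrass_basic[OF hc e] by blast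
    then obtain L where fL: "f = ev L" by auto
    have cf: "continuous_on S f" using fL ev_cont by simp
    have "?I = integral S (\<lambda>x. h x * (h x - f x)) + integral S (\<lambda>x. h x * f x)"
      by (subst integral_add[symmetric]) (auto intro!: intS continuous_intros hc cf simp: algebra_simps)
    also have "integral S (\<lambda>x. h x * f x) = 0"
    proof -
      have "integral S (\<lambda>x. h x * f x) = integral UNIV (\<lambda>x. h x * ev L x)"
        unfolding S_def fL by (rule cs_integral[symmetric], rule cs_mult_cont[OF h ev_cont], rule B)
      then show ?thesis using int_ev[OF h L] by simp
    qed
    also have "integral S (\<lambda>x. h x * (h x - f x)) \<le> integral S (\<lambda>x. e * \<bar>h x\<bar>)"
    proof -
      have "norm (integral S (\<lambda>x. h x * (h x - f x))) \<le> integral S (\<lambda>x. e * \<bar>h x\<bar>)"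
      proof (rule integral_norm_bound_integral)
        show "(\<lambda>x. h x * (h x - f x)) integrable_on S" by (auto intro!: intS continuous_intros hc cf)
        show "(\<lambda>x. e * \<bar>h x\<bar>) integrable_on S" by (auto intro!: intS continuous_intros hc)
        fix x assume "x \<in> S"
        then have "\<bar>h x - f x\<bar> \<le> e" using fe by force
        then have "\<bar>h x\<bar> * \<bar>h x - f x\<bar> \<le> \<bar>h x\<bar> * e" by (intro mult_left_mono) auto
        then show "norm (h x * (h x - f x)) \<le> e * \<bar>h x\<bar>" by (simp add: abs_mult mult.commute)
      qed
      then show ?thesis by simp
    qed
    also have "integral S (\<lambda>x. e * \<bar>h x\<bar>) = e * ?M" by simp
    finally show ?thesis by simp
  qed
  have "?I = 0"
  proof (rule ccontr)
    assume "?I \<noteq> 0"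
    then have Ipos: "0 < ?I" using I0 by simp
    define e where "e = ?I / (2 * (?M + 1))"
    have e0: "0 < e" unfolding e_def using Ipos M0 by simp
    have "?I \<le> e * ?M" by (rule Ile[OF e0])
    also have "\<dots> \<le> e * (?M + 1)" using e0 by simp
    also have "\<dots> = ?I / 2" unfolding e_def using M0 by (simp add: field_simps)
    finally show False using Ipos by simp
  qed
  moreover have cS: "continuous_on (cbox (\<chi> i. -B) (\<chi> i. B)) (\<lambda>x. h x * h x)"
    using hc unfolding S_def bx_def by (intro continuous_intros)
  moreover have ne: "box (\<chi> i. -B) (\<chi> i. B) \<noteq> ({} :: (real^2) set)"
  proof -
    have "(0::real^2) \<in> box (\<chi> i. -B) (\<chi> i. B)" using B by (simp add: mem_box_cart)
    then show ?thesis by blast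
  qed
  ultimately have hz: "\<forall>y\<in>S. h y * h y = 0"
    using integral_cbox_eq_0_iff[OF cS ne] unfolding S_def bx_def by simp
  show ?thesis
  proof (cases "x \<in> S")
    case True then show ?thesis using hz by simp
  next
    case False
    then have "R \<le> norm x" using outside_bx B unfolding S_def by force
    then show ?thesis using h cs_zero by blast
  qed
qed

lemma Aa_rewrite:
  fixes \<xi> :: "real^2"
  assumes K: "\<And>i. i < m \<Longrightarrow> K i = P * (\<Prod>j\<in>{..<m} - {i}. \<xi> \<bullet> g j) / Q"
  shows "(\<Sum>i<m. c i * K i * (\<alpha> i * H1 + \<beta> i * H2))
     = (P / Q) * (Aa m g (\<lambda>i. c i * \<alpha> i) \<xi> * H1 + Aa m g (\<lambda>i. c i * \<beta> i) \<xi> * H2)"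
proof -
  have "(\<Sum>i<m. c i * K i * (\<alpha> i * H1 + \<beta> i * H2))
      = (\<Sum>i<m. (P / Q) * ((c i * \<alpha> i * (\<Prod>j\<in>{..<m} - {i}. \<xi> \<bullet> g j)) * H1) + (P / Q) * ((c i * \<beta> i * (\<Prod>j\<in>{..<m} - {i}. \<xi> \<bullet> g j)) * H2))"
    by (rule sum.cong[OF refl]) (simp add: K algebra_simps add_divide_distrib)
  also have "\<dots> = (P / Q) * (Aa m g (\<lambda>i. c i * \<alpha> i) \<xi> * H1 + Aa m g (\<lambda>i. c i * \<beta> i) \<xi> * H2)"
    unfolding Aa_def by (simp add: sum.distrib sum_distrib_left sum_distrib_right distrib_left)
  finally show ?thesis .
qed

lemma Aa_neg: "Aa m g (\<lambda>i. c i * - b i) \<xi> = - Aa m g (\<lambda>i. c i * b i) \<xi>"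
  unfolding Aa_def by (simp add: sum_negf)

lemma K_formula:
  fixes \<xi> :: "real^2"
  assumes nz: "\<forall>j<m. \<xi> \<bullet> g j \<noteq> 0" and i: "i < m"
  shows "Ecoef ({..<m} - {i}) g \<xi> * integral {0..1} (\<lambda>t. exp (- (t * (\<xi> \<bullet> g i))))
       = (\<Prod>j<m. 1 - exp (- (\<xi> \<bullet> g j))) * (\<Prod>j\<in>{..<m} - {i}. \<xi> \<bullet> g j) / Qp m g \<xi>"
proof -
  have Li: "\<xi> \<bullet> g i \<noteq> 0" using nz i by simp
  have P: "(\<Prod>j<m. 1 - exp (- (\<xi> \<bullet> g j))) = (1 - exp (- (\<xi> \<bullet> g i))) * (\<Prod>j\<in>{..<m} - {i}. 1 - exp (- (\<xi> \<bullet> g j)))"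
    using i by (subst prod.remove[of _ i]) auto
  have Q: "Qp m g \<xi> = (\<xi> \<bullet> g i) * (\<Prod>j\<in>{..<m} - {i}. \<xi> \<bullet> g j)"
    unfolding Qp_def using i by (subst prod.remove[of _ i]) auto
  have R: "(\<Prod>j\<in>{..<m} - {i}. \<xi> \<bullet> g j) \<noteq> 0" using nz by (auto simp: prod_zero_iff)
  show ?thesis
    unfolding Ecoef_prod[OF finite_Diff[OF finite_lessThan]] exp_integral[OF Li zero_le_one] P Q
    using Li R by (simp add: field_simps)
qed

lemma invertible_if_not_sym:
  assumes r: "r > 0" and m: "m \<ge> 1" and units: "\<forall>i<m. norm (g i) = 1"
    and inj: "inj_on g {..<m}" and cnz: "\<forall>i<m. c i \<noteq> 0" and ns: "\<not> star_symmetric m g c"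
  shows "star_invertible r m g c"
  unfolding star_invertible_def
proof (intro allI impI)
  fix f1 f2 :: "real^2 \<Rightarrow> real^2"
  assume a1: "admissible_field r f1" and a2: "admissible_field r f2"
    and eq: "star_transform m g c f1 = star_transform m g c f2"
  define h1 where "h1 x = f1 x $ 1 - f2 x $ 1" for x
  define h2 where "h2 x = f1 x $ 2 - f2 x $ 2" for x
  have c11: "cs r (\<lambda>x. f1 x $ 1)" and c12: "cs r (\<lambda>x. f1 x $ 2)"
    and c21: "cs r (\<lambda>x. f2 x $ 1)" and c22: "cs r (\<lambda>x. f2 x $ 2)"
    using adm_cs[OF r a1] adm_cs[OF r a2] by auto
  have ch1: "cs r h1" unfolding h1_def[abs_def] by (rule cs_diff[OF c11 c21])
  have ch2: "cs r h2" unfolding h2_def[abs_def] by (rule cs_diff[OF c12 c22])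
  define v where "v i y = f1 y \<bullet> g i - f2 y \<bullet> g i" for i y
  define w where "w i y = f1 y \<bullet> perp (g i) - f2 y \<bullet> perp (g i)" for i y
  have cf1: "cs r (\<lambda>y. f1 y \<bullet> u)" for u by (rule cs_inner[OF c11 c12])
  have cf2: "cs r (\<lambda>y. f2 y \<bullet> u)" for u by (rule cs_inner[OF c21 c22])
  have cv: "cs r (v i)" for i unfolding v_def[abs_def] by (rule cs_diff[OF cf1 cf2])
  have cw: "cs r (w i)" for i unfolding w_def[abs_def] by (rule cs_diff[OF cf1 cf2])
  have Zv: "(\<Sum>i<m. c i * ray_transform (g i) (v i) x) = 0" for x
  proof -
    have "(\<Sum>i<m. c i * ray_transform (g i) (v i) x)
        = (\<Sum>i<m. c i * ray_transform (g i) (\<lambda>y. f1 y \<bullet> g i) x) - (\<Sum>i<m. c i * ray_transform (g i) (\<lambda>y. f2 y \<bullet> g i) x)"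
      unfolding sum_subtractf[symmetric] v_def
      by (rule sum.cong[OF refl]) (simp add: ray_diff[OF cf1 cf2] units right_diff_distrib)
    also have "\<dots> = 0" using arg_cong[OF eq, of "\<lambda>F. F x $ 1"] unfolding star_comp1 by simp
    finally show ?thesis .
  qed
  have Zw: "(\<Sum>i<m. c i * ray_transform (g i) (w i) x) = 0" for x
  proof -
    have "(\<Sum>i<m. c i * ray_transform (g i) (w i) x)
        = (\<Sum>i<m. c i * ray_transform (g i) (\<lambda>y. f1 y \<bullet> perp (g i)) x) - (\<Sum>i<m. c i * ray_transform (g i) (\<lambda>y. f2 y \<bullet> perp (g i)) x)"
      unfolding sum_subtractf[symmetric] w_def
      by (rule sum.cong[OF refl]) (simp add: ray_diff[OF cf1 cf2] units right_diff_distrib)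
    also have "\<dots> = 0" using arg_cong[OF eq, of "\<lambda>F. F x $ 2"] unfolding star_comp2 by simp
    finally show ?thesis .
  qed
  define H1 where "H1 = Lap h1"
  define H2 where "H2 = Lap h2"
  have Lv: "Lap (v i) \<xi> = g i $ 1 * H1 \<xi> + g i $ 2 * H2 \<xi>" for i \<xi>
  proof -
    have "v i = (\<lambda>y. g i $ 1 * h1 y + g i $ 2 * h2 y)"
      unfolding v_def h1_def h2_def by (rule ext) (simp add: inner2 algebra_simps)
    then show ?thesis unfolding H1_def H2_def using Lap_lin2[OF ch1 ch2] by simp
  qed
  have Lw: "Lap (w i) \<xi> = - (g i $ 2) * H1 \<xi> + g i $ 1 * H2 \<xi>" for i \<xi>
  proof -
    have we: "w i = (\<lambda>y. - (g i $ 2) * h1 y + g i $ 1 * h2 y)"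
      unfolding w_def h1_def h2_def by (rule ext) (simp add: inner2 algebra_simps)
    show ?thesis unfolding H1_def H2_def we by (rule Lap_lin2[OF ch1 ch2])
  qed
  define K where "K i \<xi> = Ecoef ({..<m} - {i}) g \<xi> * integral {0..1} (\<lambda>t. exp (- (t * (\<xi> \<bullet> g i))))" for i \<xi>
  have KI1: "(\<Sum>i<m. c i * K i \<xi> * (g i $ 1 * H1 \<xi> + g i $ 2 * H2 \<xi>)) = 0" for \<xi>
    using key_identity[OF units cv Zv, of \<xi>] unfolding K_def Lv by simp
  have KI2: "(\<Sum>i<m. c i * K i \<xi> * (- (g i $ 2) * H1 \<xi> + g i $ 1 * H2 \<xi>)) = 0" for \<xi>
    using key_identity[OF units cw Zw, of \<xi>] unfolding K_def Lw by simp
  let ?A1 = "Aa m g (\<lambda>i. c i * g i $ 1)" and ?A2 = "Aa m g (\<lambda>i. c i * g i $ 2)"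
  define Fg where "Fg \<xi> = Qp m g \<xi> * ((?A1 \<xi>)^2 + (?A2 \<xi>)^2)" for \<xi>
  have Fg_rpf: "real_polynomial_function Fg"
    unfolding Fg_def[abs_def]
    by (intro real_polynomial_function.intros(3,4) real_polynomial_function_power Qp_rpf Aa_rpf)
  obtain \<xi>1 where \<xi>1: "Fg \<xi>1 \<noteq> 0" using exists_good[OF units inj m cnz ns] unfolding Fg_def by blast
  have good: "H1 \<xi> = 0 \<and> H2 \<xi> = 0" if F: "Fg \<xi> \<noteq> 0" for \<xi>
  proof -
    have Q: "Qp m g \<xi> \<noteq> 0" and S: "(?A1 \<xi>)^2 + (?A2 \<xi>)^2 \<noteq> 0" using F unfolding Fg_def by auto
    have nz: "\<forall>j<m. \<xi> \<bullet> g j \<noteq> 0" using Q unfolding Qp_def by (auto simp: prod_zero_iff)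
    define P where "P = (\<Prod>j<m. 1 - exp (- (\<xi> \<bullet> g j)))"
    have P0: "P \<noteq> 0" unfolding P_def using nz by (auto simp: prod_zero_iff)
    have Kf: "K i \<xi> = P * (\<Prod>j\<in>{..<m} - {i}. \<xi> \<bullet> g j) / Qp m g \<xi>" if "i < m" for i
      unfolding K_def P_def by (rule K_formula[OF nz that])
    have "(\<Sum>i<m. c i * K i \<xi> * (g i $ 1 * H1 \<xi> + g i $ 2 * H2 \<xi>)) = (P / Qp m g \<xi>) * (?A1 \<xi> * H1 \<xi> + ?A2 \<xi> * H2 \<xi>)"
      by (rule Aa_rewrite, rule Kf)
    then have E1: "(P / Qp m g \<xi>) * (?A1 \<xi> * H1 \<xi> + ?A2 \<xi> * H2 \<xi>) = 0"
      using KI1[of \<xi>] by simp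
    have "(\<Sum>i<m. c i * K i \<xi> * (- (g i $ 2) * H1 \<xi> + g i $ 1 * H2 \<xi>)) = (P / Qp m g \<xi>) * (Aa m g (\<lambda>i. c i * - (g i $ 2)) \<xi> * H1 \<xi> + ?A1 \<xi> * H2 \<xi>)"
      by (rule Aa_rewrite, rule Kf)
    then have E2': "(P / Qp m g \<xi>) * (Aa m g (\<lambda>i. c i * - (g i $ 2)) \<xi> * H1 \<xi> + ?A1 \<xi> * H2 \<xi>) = 0"
      using KI2[of \<xi>] by simp
    have PQ: "P / Qp m g \<xi> \<noteq> 0" using P0 Q by simp
    have e1: "?A1 \<xi> * H1 \<xi> + ?A2 \<xi> * H2 \<xi> = 0" using E1 PQ by simp
    have e2: "- ?A2 \<xi> * H1 \<xi> + ?A1 \<xi> * H2 \<xi> = 0" using E2' PQ unfolding Aa_neg by simp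
    have "((?A1 \<xi>)^2 + (?A2 \<xi>)^2) * H1 \<xi> = ?A1 \<xi> * (?A1 \<xi> * H1 \<xi> + ?A2 \<xi> * H2 \<xi>) - ?A2 \<xi> * (- ?A2 \<xi> * H1 \<xi> + ?A1 \<xi> * H2 \<xi>)"
      by (simp add: power2_eq_square algebra_simps)
    then have "((?A1 \<xi>)^2 + (?A2 \<xi>)^2) * H1 \<xi> = 0" using e1 e2 by simp
    moreover have "((?A1 \<xi>)^2 + (?A2 \<xi>)^2) * H2 \<xi> = ?A2 \<xi> * (?A1 \<xi> * H1 \<xi> + ?A2 \<xi> * H2 \<xi>) + ?A1 \<xi> * (- ?A2 \<xi> * H1 \<xi> + ?A1 \<xi> * H2 \<xi>)"
      by (simp add: power2_eq_square algebra_simps)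
    then have "((?A1 \<xi>)^2 + (?A2 \<xi>)^2) * H2 \<xi> = 0" using e1 e2 by simp
    ultimately show ?thesis using S by (simp only: mult_eq_0_iff) blast
  qed
  have H1z: "Lap h1 \<xi> = 0" for \<xi>
    using density[OF Fg_rpf \<xi>1 Lap_cont[OF ch1]] good unfolding H1_def by blast
  have H2z: "Lap h2 \<xi> = 0" for \<xi>
    using density[OF Fg_rpf \<xi>1 Lap_cont[OF ch2]] good unfolding H2_def by blast
  have "h1 x = 0" "h2 x = 0" for x using Lap_unique[OF ch1 H1z] Lap_unique[OF ch2 H2z] by auto
  then show "f1 = f2" unfolding h1_def h2_def by (auto simp: fun_eq_iff vec2_eq)
qed

definition qf :: "real \<Rightarrow> real" where "qf t = t + \<bar>t\<bar>"

lemma qf_cont: "continuous_on S qf"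
  unfolding qf_def by (intro continuous_intros)

lemma qf_pos: "0 < t \<Longrightarrow> qf t = 2 * t" unfolding qf_def by simp
lemma qf_neg: "t \<le> 0 \<Longrightarrow> qf t = 0" unfolding qf_def by simp
lemma qf_abs: "\<bar>qf t\<bar> \<le> 2 * \<bar>t\<bar>" unfolding qf_def by simp

lemma qf_pow_deriv:
  assumes n: "2 \<le> n"
  shows "((\<lambda>s. qf s ^ n) has_real_derivative (2 * real n * qf t ^ (n - 1))) (at t)"
proof (cases "t > 0")
  case True
  have d2: "((\<lambda>s. 2 * s) has_real_derivative 2) (at t)"
    using DERIV_cmult_Id[of 2 t] by simp
  have D: "((\<lambda>s. (2 * s) ^ n) has_real_derivative (of_nat n * (2 * (2 * t) ^ (n - Suc 0)))) (at t)"
    by (rule DERIV_power[OF d2])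
  have e: "2 * real n * qf t ^ (n - 1) = of_nat n * (2 * (2 * t) ^ (n - Suc 0))"
    unfolding qf_pos[OF True] by (simp only: ac_simps One_nat_def)
  have "((\<lambda>s. (2 * s) ^ n) has_real_derivative (2 * real n * qf t ^ (n - 1))) (at t)"
    unfolding e by (rule D)
  then show ?thesis
    by (rule has_field_derivative_transform_within_open[where S="{0<..}"]) (use True in \<open>auto simp: qf_pos\<close>)
next
  case False
  show ?thesis
  proof (cases "t < 0")
    case True
    have "((\<lambda>s. 0) has_real_derivative 0) (at t)" by simp
    have e0: "2 * real n * qf t ^ (n - 1) = 0" using True n by (simp add: qf_neg)
    have "((\<lambda>s. 0) has_real_derivative (2 * real n * qf t ^ (n - 1))) (at t)"
      unfolding e0 by simp
    then show ?thesis
      by (rule has_field_derivative_transform_within_open[where S="{..<0}"]) (use True n in \<open>auto simp: qf_neg\<close>)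
  next
    case False
    then have t: "t = 0" using \<open>\<not> t > 0\<close> by simp
    have "((\<lambda>y. (qf y ^ n - qf 0 ^ n) / (y - 0)) \<longlongrightarrow> 0) (at 0)"
    proof (rule Lim_null_comparison)
      show "\<forall>\<^sub>F y in at 0. norm ((qf y ^ n - qf 0 ^ n) / (y - 0)) \<le> 2 ^ n * \<bar>y\<bar> ^ (n - 1)"
      proof (rule always_eventually, rule allI)
        fix y :: real
        show "norm ((qf y ^ n - qf 0 ^ n) / (y - 0)) \<le> 2 ^ n * \<bar>y\<bar> ^ (n - 1)"
        proof (cases "y = 0")
          case True then show ?thesis using n by simp
        next
          case False
          have q0: "qf 0 = 0" by (simp add: qf_def)
          have "\<bar>qf y\<bar> ^ n \<le> (2 * \<bar>y\<bar>) ^ n" by (rule power_mono[OF qf_abs]) simp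
          also have "\<dots> = 2 ^ n * \<bar>y\<bar> ^ (n - 1) * \<bar>y\<bar>"
            using n by (simp add: power_mult_distrib mult.assoc power_Suc2[symmetric])
          finally have "\<bar>qf y\<bar> ^ n / \<bar>y\<bar> \<le> 2 ^ n * \<bar>y\<bar> ^ (n - 1)"
            using False by (simp add: divide_le_eq)
          moreover have "(0::real) ^ n = 0" using n by simp
          ultimately show ?thesis using q0 n by (simp add: abs_divide power_abs power_0_left)
        qed
      qed
      have "((\<lambda>y. 2 ^ n * \<bar>y\<bar> ^ (n - 1)) \<longlongrightarrow> 2 ^ n * \<bar>0::real\<bar> ^ (n - 1)) (at 0)"
        by (intro tendsto_intros)
      moreover have "2 ^ n * \<bar>0::real\<bar> ^ (n - 1) = 0" using n by (simp add: power_0_left)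
      ultimately show "((\<lambda>y. 2 ^ n * \<bar>y\<bar> ^ (n - 1)) \<longlongrightarrow> 0) (at (0::real))" by metis
    qed
    then have "((\<lambda>s. qf s ^ n) has_real_derivative 0) (at 0)"
      by (simp add: has_field_derivative_iff)
    then show ?thesis using t n by (simp add: qf_def power_0_left)
  qed
qed

lemma pderiv2_eq:
  assumes "\<And>x. (f has_derivative D x) (at x)"
  shows "pderiv2 f j = (\<lambda>x. D x (axis j 1))"
  unfolding pderiv2_def using frechet_derivative_at[OF assms] by (auto simp: fun_eq_iff)

lemma pderiv_translate:
  assumes "\<forall>x. h differentiable (at x)"
  shows "pderiv2 (\<lambda>x. h (x + a)) j = (\<lambda>x. pderiv2 h j (x + a))"
proof -
  have "((\<lambda>x. h (x + a)) has_derivative frechet_derivative h (at (x + a))) (at x)" for x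
  proof -
    have 1: "((\<lambda>x. x + a) has_derivative (\<lambda>y. y)) (at x)" by (auto intro!: derivative_eq_intros)
    have 2: "(h has_derivative frechet_derivative h (at (x + a))) (at (x + a))"
      using assms frechet_derivative_works by blast
    show ?thesis using has_derivative_compose[OF 1 2] by simp
  qed
  then have "pderiv2 (\<lambda>x. h (x + a)) j = (\<lambda>x. frechet_derivative h (at (x + a)) (axis j 1))"
    by (rule pderiv2_eq)
  then show ?thesis by (simp add: pderiv2_def)
qed

lemma differentiable_translate:
  assumes "\<forall>x. h differentiable (at x)"
  shows "\<forall>x. (\<lambda>x. h (x + a)) differentiable (at x)"
proof
  fix x
  have 1: "((\<lambda>x. x + a) has_derivative (\<lambda>y. y)) (at x)" by (auto intro!: derivative_eq_intros)
  have 2: "(h has_derivative frechet_derivative h (at (x + a))) (at (x + a))"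
    using assms frechet_derivative_works by blast
  show "(\<lambda>x. h (x + a)) differentiable (at x)"
    using has_derivative_compose[OF 1 2] unfolding differentiable_def by auto
qed

lemma pderiv_diff:
  assumes "\<forall>x. h1 differentiable (at x)" "\<forall>x. h2 differentiable (at x)"
  shows "pderiv2 (\<lambda>x. h1 x - h2 x) j = (\<lambda>x. pderiv2 h1 j x - pderiv2 h2 j x)"
proof -
  have "((\<lambda>x. h1 x - h2 x) has_derivative (\<lambda>y. frechet_derivative h1 (at x) y - frechet_derivative h2 (at x) y)) (at x)" for x
    using assms frechet_derivative_works by (blast intro: has_derivative_diff)
  then have "pderiv2 (\<lambda>x. h1 x - h2 x) j = (\<lambda>x. frechet_derivative h1 (at x) (axis j 1) - frechet_derivative h2 (at x) (axis j 1))"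
    by (rule pderiv2_eq)
  then show ?thesis by (simp add: pderiv2_def)
qed

lemma differentiable_diff2:
  assumes "\<forall>x. h1 differentiable (at x)" "\<forall>x. h2 differentiable (at x)"
  shows "\<forall>x. (\<lambda>x. h1 x - h2 x) differentiable (at x)"
  using assms by (auto intro: differentiable_diff)

lemma C2_translate:
  assumes "C2 h"
  shows "C2 (\<lambda>x. h (x + a))"
proof -
  have d: "\<forall>x. h differentiable (at x)" using assms unfolding C2_def by auto
  have dj: "\<forall>x. pderiv2 h j differentiable (at x)" for j using assms unfolding C2_def by auto
  have c: "continuous_on UNIV (pderiv2 (pderiv2 h j) k)" for j k using assms unfolding C2_def by auto
  have e1: "pderiv2 (\<lambda>x. h (x + a)) j = (\<lambda>x. pderiv2 h j (x + a))" for j by (rule pderiv_translate[OF d])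
  have e2: "pderiv2 (\<lambda>x. pderiv2 h j (x + a)) k = (\<lambda>x. pderiv2 (pderiv2 h j) k (x + a))" for j k
    by (rule pderiv_translate[OF dj])
  show ?thesis unfolding C2_def e1 e2
  proof (intro conjI allI)
    show "(\<lambda>x. h (x + a)) differentiable (at x)" for x using differentiable_translate[OF d] by blast
    show "(\<lambda>x. pderiv2 h j (x + a)) differentiable (at x)" for j x using differentiable_translate[OF dj] by blast
    show "continuous_on UNIV (\<lambda>x. pderiv2 (pderiv2 h j) k (x + a))" for j k
      by (rule continuous_on_compose2[OF c[of j k]]) (auto intro!: continuous_intros)
  qed
qed

lemma C2_diff:
  assumes "C2 h1" "C2 h2"
  shows "C2 (\<lambda>x. h1 x - h2 x)"
proof -
  have d1: "\<forall>x. h1 differentiable (at x)" using assms(1) unfolding C2_def by auto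
  have dj1: "\<forall>x. pderiv2 h1 j differentiable (at x)" for j using assms unfolding C2_def by auto
  have c1: "continuous_on UNIV (pderiv2 (pderiv2 h1 j) k)" for j k using assms unfolding C2_def by auto
  have d2: "\<forall>x. h2 differentiable (at x)" using assms unfolding C2_def by auto
  have dj2: "\<forall>x. pderiv2 h2 j differentiable (at x)" for j using assms unfolding C2_def by auto
  have c2: "continuous_on UNIV (pderiv2 (pderiv2 h2 j) k)" for j k using assms unfolding C2_def by auto
  have e1: "pderiv2 (\<lambda>x. h1 x - h2 x) j = (\<lambda>x. pderiv2 h1 j x - pderiv2 h2 j x)" for j by (rule pderiv_diff[OF d1 d2])
  have e2: "pderiv2 (\<lambda>x. pderiv2 h1 j x - pderiv2 h2 j x) k = (\<lambda>x. pderiv2 (pderiv2 h1 j) k x - pderiv2 (pderiv2 h2 j) k x)" for j k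
    by (rule pderiv_diff[OF dj1 dj2])
  show ?thesis unfolding C2_def e1 e2
  proof (intro conjI allI)
    show "(\<lambda>x. h1 x - h2 x) differentiable (at x)" for x using differentiable_diff2[OF d1 d2] by blast
    show "(\<lambda>x. pderiv2 h1 j x - pderiv2 h2 j x) differentiable (at x)" for j x using differentiable_diff2[OF dj1 dj2] by blast
    show "continuous_on UNIV (\<lambda>x. pderiv2 (pderiv2 h1 j) k x - pderiv2 (pderiv2 h2 j) k x)" for j k
      by (intro continuous_intros c1 c2)
  qed
qed

lemma C2_zero: "C2 (\<lambda>x. 0)"
proof -
  have e: "pderiv2 (\<lambda>x. 0) j = (\<lambda>x. 0)" for j
    using pderiv2_eq[of "\<lambda>x. 0" "\<lambda>x y. 0"] by simp
  show ?thesis unfolding C2_def e by simp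
qed

definition bump :: "real \<Rightarrow> real^2 \<Rightarrow> real" where
  "bump \<rho> x = qf (\<rho>^2 - x \<bullet> x) ^ 3"

lemma g_deriv: "((\<lambda>x::real^2. \<rho>^2 - x \<bullet> x) has_derivative (\<lambda>h. - (2 * (x \<bullet> h)))) (at x)"
proof -
  have "((\<lambda>x::real^2. \<rho>^2 - x \<bullet> x) has_derivative (\<lambda>h. 0 - (x \<bullet> h + h \<bullet> x))) (at x)"
    by (intro derivative_intros)
  then show ?thesis by (simp add: inner_commute)
qed

lemma bump_deriv: "(bump \<rho> has_derivative (\<lambda>h. - (2 * (x \<bullet> h)) * (6 * qf (\<rho>^2 - x \<bullet> x) ^ 2))) (at x)"
proof -
  have "((\<lambda>x. qf (\<rho>^2 - x \<bullet> x) ^ 3) has_derivative (\<lambda>h. - (2 * (x \<bullet> h)) * (2 * real 3 * qf (\<rho>^2 - x \<bullet> x) ^ (3 - 1)))) (at x)"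
    by (rule DERIV_compose_FDERIV[OF qf_pow_deriv g_deriv]) simp
  then show ?thesis unfolding bump_def[abs_def] by simp
qed

definition psi1 :: "real \<Rightarrow> 2 \<Rightarrow> real^2 \<Rightarrow> real" where
  "psi1 \<rho> j x = - (2 * (x \<bullet> axis j 1)) * (6 * qf (\<rho>^2 - x \<bullet> x) ^ 2)"

lemma pderiv_bump: "pderiv2 (bump \<rho>) j = psi1 \<rho> j"
  unfolding pderiv2_eq[OF bump_deriv] psi1_def by simp

lemma psi1_deriv: "(psi1 \<rho> j has_derivative
   (\<lambda>h. - (2 * (h \<bullet> axis j 1)) * (6 * qf (\<rho>^2 - x \<bullet> x) ^ 2) + - (2 * (x \<bullet> axis j 1)) * (6 * (- (2 * (x \<bullet> h)) * (2 * real 2 * qf (\<rho>^2 - x \<bullet> x) ^ (2 - 1)))))) (at x)"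
proof -
  have a: "((\<lambda>x. - (2 * (x \<bullet> axis j 1))) has_derivative (\<lambda>h. - (2 * (h \<bullet> axis j 1)))) (at x)"
    by (intro derivative_intros)
  have b: "((\<lambda>x. qf (\<rho>^2 - x \<bullet> x) ^ 2) has_derivative (\<lambda>h. - (2 * (x \<bullet> h)) * (2 * real 2 * qf (\<rho>^2 - x \<bullet> x) ^ (2 - 1)))) (at x)"
    by (rule DERIV_compose_FDERIV[OF qf_pow_deriv g_deriv]) simp
  have b': "((\<lambda>x. 6 * qf (\<rho>^2 - x \<bullet> x) ^ 2) has_derivative (\<lambda>h. 6 * (- (2 * (x \<bullet> h)) * (2 * real 2 * qf (\<rho>^2 - x \<bullet> x) ^ (2 - 1))))) (at x)"
    by (rule has_derivative_mult_right[OF b])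
  show ?thesis unfolding psi1_def[abs_def]
    using has_derivative_mult[OF a b'] by (simp add: algebra_simps)
qed

lemma C2_bump: "C2 (bump \<rho>)"
  unfolding C2_def pderiv_bump
proof (intro conjI allI)
  show "bump \<rho> differentiable (at x)" for x using bump_deriv unfolding differentiable_def by blast
  show "psi1 \<rho> j differentiable (at x)" for j x using psi1_deriv unfolding differentiable_def by blast
  show "continuous_on UNIV (pderiv2 (psi1 \<rho> j) k)" for j k
    unfolding pderiv2_eq[OF psi1_deriv]
    by (intro continuous_intros continuous_on_compose2[OF qf_cont]) auto
qed

lemma bump_zero: 
  assumes "0 \<le> \<rho>" "\<rho> \<le> norm x" shows "bump \<rho> x = 0"
proof -
  have "\<rho>^2 \<le> (norm x)^2" using assms by (rule power_mono[OF assms(2) assms(1)] | simp add: power_mono)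
  then have "\<rho>^2 - x \<bullet> x \<le> 0" by (simp add: dot_square_norm)
  then show ?thesis unfolding bump_def by (simp add: qf_neg)
qed

lemma bump_0: "0 < \<rho> \<Longrightarrow> bump \<rho> 0 \<noteq> 0"
  unfolding bump_def by (simp add: qf_pos)

lemma cs_bump: "0 < \<rho> \<Longrightarrow> cs \<rho> (bump \<rho>)"
  unfolding cs_def using C2_cont[OF C2_bump] bump_zero[of \<rho>] by auto

lemma Dop_fun_insert:
  "finite J \<Longrightarrow> i \<notin> J \<Longrightarrow> Dop (insert i J) a \<phi> = (\<lambda>x. Dop J a \<phi> x - Dop J a \<phi> (x + a i))"
  by (rule ext) (rule Dop_insert)

lemma Dop_C2:
  assumes "finite J" "C2 \<phi>"
  shows "C2 (Dop J a \<phi>)"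
  using assms(1)
proof (induction J rule: finite_induct)
  case empty
  have "Dop {} a \<phi> = \<phi>" by (rule ext) simp
  then show ?case using assms(2) by simp
next
  case (insert i J)
  show ?case unfolding Dop_fun_insert[OF insert(1,2)]
    by (rule C2_diff[OF insert(3) C2_translate[OF insert(3)]])
qed

lemma periodic_zero:
  fixes \<psi> :: "real^2 \<Rightarrow> real"
  assumes z: "\<And>x. R \<le> norm x \<Longrightarrow> \<psi> x = 0" and a: "a \<noteq> 0" and per: "\<And>x. \<psi> x = \<psi> (x + a)"
  shows "\<psi> x = 0"
proof -
  have n: "\<psi> x = \<psi> (x + real n *\<^sub>R a)" for n
  proof (induction n)
    case 0 then show ?case by simp
  next
    case (Suc n)
    have "\<psi> (x + real (Suc n) *\<^sub>R a) = \<psi> ((x + real n *\<^sub>R a) + a)" by (simp add: algebra_simps)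
    then show ?case using Suc per by metis
  qed
  have "0 < norm a" using a by simp
  then obtain n where nn: "R + norm x < real n * norm a" using ex_less_of_nat_mult by blast
  have "norm (real n *\<^sub>R a) \<le> norm (x + real n *\<^sub>R a) + norm x"
    by (metis add.commute add_diff_cancel norm_triangle_ineq4)
  then have "R \<le> norm (x + real n *\<^sub>R a)" using nn by simp
  then show ?thesis using n z by metis
qed

lemma Dop_nonzero:
  assumes "finite J" "cs R \<phi>" "\<phi> x0 \<noteq> 0" "\<forall>j\<in>J. a j \<noteq> 0"
  shows "\<exists>x. Dop J a \<phi> x \<noteq> 0"
  using assms(1,4)
proof (induction J rule: finite_induct)
  case empty then show ?case using assms(3) by (intro exI[of _ x0]) simp
next
  case (insert i J)
  obtain x1 where x1: "Dop J a \<phi> x1 \<noteq> 0" using insert by auto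
  have csJ: "cs (R + (\<Sum>j\<in>J. norm (a j))) (Dop J a \<phi>)" by (rule cs_Dop[OF assms(2) insert(1)])
  show ?case
  proof (rule ccontr)
    assume "\<not> ?case"
    then have per: "Dop J a \<phi> x = Dop J a \<phi> (x + a i)" for x
      using Dop_insert[OF insert(1,2), of a \<phi> x] by auto
    have z: "Dop J a \<phi> x = 0" if "R + (\<Sum>j\<in>J. norm (a j)) \<le> norm x" for x
      by (rule cs_zero[OF csJ that])
    have ai: "a i \<noteq> 0" using insert(4) by simp
    have "Dop J a \<phi> x1 = 0" by (rule periodic_zero[where \<psi>="Dop J a \<phi>", OF z ai per])
    then show False using x1 by simp
  qed
qed

lemma integral_zero_on:
  assumes "\<And>t. t \<in> {a..b} \<Longrightarrow> f t = (0::real)"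
  shows "integral {a..b} f = 0"
proof -
  have "integral {a..b} f = integral {a..b} (\<lambda>t. 0)" by (rule integral_cong) (use assms in auto)
  then show ?thesis by simp
qed

lemma line_zero:
  assumes cs: "cs R ch" and g: "norm \<gamma> = 1" and s: "0 \<le> s"
  shows "ray_transform \<gamma> (\<lambda>y. ch y - ch (y + s *\<^sub>R \<gamma>)) x + ray_transform (- \<gamma>) (\<lambda>y. ch y - ch (y + s *\<^sub>R \<gamma>)) x = 0"
proof -
  let ?\<psi> = "\<lambda>y. ch y - ch (y + s *\<^sub>R \<gamma>)"
  let ?f = "\<lambda>t. ch (x + t *\<^sub>R \<gamma>)"
  have R0: "0 \<le> R" using cs cs_def by auto
  have cs\<psi>: "cs (R + s) ?\<psi>"
    using cs_diff[OF cs_mono[OF cs, of "R + norm (s *\<^sub>R \<gamma>)"] cs_translate[OF cs, of "s *\<^sub>R \<gamma>"]] s g by simp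
  define T where "T = R + s + norm x"
  have T0: "0 \<le> T" unfolding T_def using R0 s by simp
  have g': "norm (- \<gamma>) = 1" using g by simp
  have 1: "ray_transform \<gamma> ?\<psi> x = integral {0..T} (\<lambda>t. ?\<psi> (x + t *\<^sub>R \<gamma>))"
    by (rule ray_eq[OF cs\<psi> g]) (simp add: T_def)
  have 2: "ray_transform (- \<gamma>) ?\<psi> x = integral {-T..0} (\<lambda>t. ?\<psi> (x + t *\<^sub>R \<gamma>))"
  proof -
    have "ray_transform (- \<gamma>) ?\<psi> x = integral {0..T} (\<lambda>t. ?\<psi> (x + t *\<^sub>R (- \<gamma>)))"
      by (rule ray_eq[OF cs\<psi> g']) (simp add: T_def)
    also have "\<dots> = integral {- 0..- (- T)} (\<lambda>t. (\<lambda>t. ?\<psi> (x + t *\<^sub>R \<gamma>)) (- t))"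
      by simp
    also have "\<dots> = integral {-T..0} (\<lambda>t. ?\<psi> (x + t *\<^sub>R \<gamma>))"
      using Henstock_Kurzweil_Integration.integral_reflect_real[where f="\<lambda>t. ?\<psi> (x + t *\<^sub>R \<gamma>)" and a="-T" and b=0] by simp
    finally show ?thesis .
  qed
  have lc: "continuous_on S (\<lambda>t. ?\<psi> (x + t *\<^sub>R \<gamma>))" for S by (rule line_cont[OF cs\<psi>])
  have fc: "continuous_on S ?f" for S by (rule line_cont[OF cs])
  have fc2: "continuous_on S (\<lambda>t. ch (x + (t *\<^sub>R \<gamma> + s *\<^sub>R \<gamma>)))" for S
  proof -
    have "continuous_on S (\<lambda>t. ch ((x + s *\<^sub>R \<gamma>) + t *\<^sub>R \<gamma>))" by (rule line_cont[OF cs])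
    then show ?thesis by (simp add: add_ac)
  qed
  have "ray_transform \<gamma> ?\<psi> x + ray_transform (- \<gamma>) ?\<psi> x = integral {-T..T} (\<lambda>t. ?\<psi> (x + t *\<^sub>R \<gamma>))"
  proof -
    have c: "integral {-T..0} (\<lambda>t. ?\<psi> (x + t *\<^sub>R \<gamma>)) + integral {0..T} (\<lambda>t. ?\<psi> (x + t *\<^sub>R \<gamma>)) = integral {-T..T} (\<lambda>t. ?\<psi> (x + t *\<^sub>R \<gamma>))"
      by (rule Henstock_Kurzweil_Integration.integral_combine) (use T0 in \<open>auto intro: integrable_continuous_interval lc\<close>)
    show ?thesis using c unfolding 1 2 by linarith
  qed
  also have "\<dots> = integral {-T..T} ?f - integral {-T..T} (?f \<circ> (\<lambda>t. t + s))"
    by (subst integral_diff[symmetric]) (auto simp: o_def scaleR_add_left add_ac intro!: integrable_continuous_interval fc fc2)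
  also have "integral {-T..T} (?f \<circ> (\<lambda>t. t + s)) = integral {-T+s..T+s} ?f"
    using integral_shift[of "-T" s T ?f] fc by simp
  also have "integral {-T..T} ?f = integral {-T..T+s} ?f"
  proof -
    have "integral {-T..T} ?f + integral {T..T+s} ?f = integral {-T..T+s} ?f"
      by (rule Henstock_Kurzweil_Integration.integral_combine) (use T0 s in \<open>auto intro: integrable_continuous_interval fc\<close>)
    moreover have "integral {T..T+s} ?f = 0"
      by (rule integral_zero_on, rule cs_line[OF cs g]) (use T0 in \<open>auto simp: T_def\<close>)
    ultimately show ?thesis by simp
  qed
  also have "integral {-T+s..T+s} ?f = integral {-T..T+s} ?f"
  proof -
    have "integral {-T..-T+s} ?f + integral {-T+s..T+s} ?f = integral {-T..T+s} ?f"
      by (rule Henstock_Kurzweil_Integration.integral_combine) (use T0 s in \<open>auto intro: integrable_continuous_interval fc\<close>)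
    moreover have "integral {-T..-T+s} ?f = 0"
      by (rule integral_zero_on, rule cs_line[OF cs g]) (use T0 s in \<open>auto simp: T_def\<close>)
    ultimately show ?thesis by simp
  qed
  finally show ?thesis by simp
qed

lemma C2c_of_cs:
  assumes "C2 h" "cs R h" "R < r"
  shows "C2c_disc r h"
proof -
  have "{x. h x \<noteq> 0} \<subseteq> cball 0 R"
  proof
    fix x assume "x \<in> {x. h x \<noteq> 0}"
    then have "\<not> R \<le> norm x" using cs_zero[OF assms(2)] by auto
    then show "x \<in> cball 0 R" by simp
  qed
  then have sub: "support h \<subseteq> cball 0 R" unfolding support_def by (rule closure_minimal) simp
  have "compact (support h)" unfolding compact_eq_bounded_closed
    using bounded_subset[OF bounded_cball sub] by (simp add: support_def)
  moreover have "support h \<subseteq> ball 0 r" using sub assms(3) by auto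
  ultimately show ?thesis unfolding C2c_disc_def using assms(1) by simp
qed

lemma ray_scale: "ray_transform \<gamma> (\<lambda>y. \<psi> y * \<alpha>) x = ray_transform \<gamma> \<psi> x * \<alpha>"
  unfolding ray_transform_def by simp

lemma ray_zero: "ray_transform \<gamma> (\<lambda>y. 0) x = 0"
  unfolding ray_transform_def by simp

lemma sum_pairs:
  fixes k :: nat and p :: "nat \<Rightarrow> nat"
  assumes p: "p permutes {..<2 * k}"
  shows "(\<Sum>i<2 * k. F i) = (\<Sum>i<k. F (p i) + F (p (k + i)))"
proof -
  have S: "{..<2 * k} = {..<k} \<union> (\<lambda>i. k + i) ` {..<k}"
  proof (rule set_eqI)
    fix x show "x \<in> {..<2 * k} \<longleftrightarrow> x \<in> {..<k} \<union> (\<lambda>i. k + i) ` {..<k}"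
    proof
      assume "x \<in> {..<2 * k}"
      then show "x \<in> {..<k} \<union> (\<lambda>i. k + i) ` {..<k}"
        by (cases "x < k") (auto intro!: image_eqI[of _ _ "x - k"])
    qed auto
  qed
  have "(\<Sum>i<2 * k. F i) = (\<Sum>i\<in>{..<k} \<union> (\<lambda>i. k + i) ` {..<k}. F (p i))"
    using sum.permute[OF p, of F] S by (simp add: o_def)
  also have "(\<Sum>i\<in>{..<k} \<union> (\<lambda>i. k + i) ` {..<k}. F (p i)) = (\<Sum>i<k. F (p i)) + (\<Sum>i\<in>(\<lambda>i. k + i) ` {..<k}. F (p i))"
    by (rule sum.union_disjoint) auto
  also have "(\<Sum>i\<in>(\<lambda>i. k + i) ` {..<k}. F (p i)) = (\<Sum>i<k. F (p (k + i)))"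
    by (subst sum.reindex) (auto simp: inj_on_def)
  finally show ?thesis by (simp add: sum.distrib)
qed

lemma comp_zero:
  fixes k :: nat and p :: "nat \<Rightarrow> nat"
  assumes perm: "p permutes {..<2 * k}"
    and pr: "\<forall>i<k. g (p i) = - g (p (k + i)) \<and> c (p i) = - c (p (k + i))"
    and odd: "\<And>v. \<beta> (- v) = - \<beta> v"
    and hline: "\<And>i. i < k \<Longrightarrow> ray_transform (g (p i)) \<psi> x + ray_transform (- g (p i)) \<psi> x = 0"
  shows "(\<Sum>i<2 * k. c i * (ray_transform (g i) \<psi> x * \<beta> (g i))) = 0"
proof -
  have "(\<Sum>i<2 * k. c i * (ray_transform (g i) \<psi> x * \<beta> (g i)))
     = (\<Sum>i<k. c (p i) * (ray_transform (g (p i)) \<psi> x * \<beta> (g (p i))) + c (p (k + i)) * (ray_transform (g (p (k + i))) \<psi> x * \<beta> (g (p (k + i)))))"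
    by (rule sum_pairs[OF perm])
  also have "\<dots> = (\<Sum>i<k. 0)"
  proof (rule sum.cong[OF refl])
    fix i assume "i \<in> {..<k}"
    then have i: "i < k" by simp
    have e: "g (p (k + i)) = - g (p i)" "c (p (k + i)) = - c (p i)" using pr i by auto
    have "c (p i) * (ray_transform (g (p i)) \<psi> x * \<beta> (g (p i))) + c (p (k + i)) * (ray_transform (g (p (k + i))) \<psi> x * \<beta> (g (p (k + i))))
       = c (p i) * \<beta> (g (p i)) * (ray_transform (g (p i)) \<psi> x + ray_transform (- g (p i)) \<psi> x)"
      unfolding e odd by (simp add: algebra_simps)
    also have "\<dots> = 0" using hline[OF i] by simp
    finally show "c (p i) * (ray_transform (g (p i)) \<psi> x * \<beta> (g (p i))) + c (p (k + i)) * (ray_transform (g (p (k + i))) \<psi> x * \<beta> (g (p (k + i)))) = 0" .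
  qed
  finally show ?thesis by simp
qed

lemma not_invertible_if_sym:
  assumes r: "r > 0" and units: "\<forall>i<m. norm (g i) = 1" and sym: "star_symmetric m g c"
  shows "\<not> star_invertible r m g c"
proof -
  obtain k p where k1: "k \<ge> 1" and mk: "m = 2 * k" and perm: "p permutes {..<m}"
    and pr: "\<forall>i<k. g (p i) = - g (p (k + i)) \<and> c (p i) = - c (p (k + i))"
    using sym unfolding star_symmetric_def by blast
  define \<rho> where "\<rho> = r / 2"
  define s where "s = r / (4 * real k)"
  have \<rho>0: "0 < \<rho>" and s0: "0 < s" using r k1 unfolding \<rho>_def s_def by auto
  define a where "a i = s *\<^sub>R g (p i)" for i
  have pin: "p i < m" if "i < k" for i using permutes_in_image[OF perm, of i] that mk by simp
  have na: "norm (a i) = s" if "i < k" for i using units pin[OF that] s0 unfolding a_def by simp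
  have a0: "\<forall>j\<in>{..<k}. a j \<noteq> 0" using na s0 by fastforce
  define \<psi> where "\<psi> = Dop {..<k} a (bump \<rho>)"
  have sumna: "(\<Sum>j\<in>{..<k}. norm (a j)) = real k * s" using na by simp
  have cs\<psi>: "cs (\<rho> + real k * s) \<psi>"
    using cs_Dop[OF cs_bump[OF \<rho>0], of "{..<k}" a] sumna unfolding \<psi>_def by simp
  have lt: "\<rho> + real k * s < r" unfolding \<rho>_def s_def using r k1 by (simp add: field_simps)
  have C2\<psi>: "C2 \<psi>" unfolding \<psi>_def by (rule Dop_C2[OF finite_lessThan C2_bump])
  obtain x0 where x0: "\<psi> x0 \<noteq> 0"
    using Dop_nonzero[OF finite_lessThan cs_bump[OF \<rho>0] bump_0[OF \<rho>0] a0] unfolding \<psi>_def by blast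
  define f1 where "f1 x = (vector [\<psi> x, 0] :: real^2)" for x
  have adm1: "admissible_field r f1"
    unfolding admissible_field_def forall_2 f1_def
  proof
    show "C2c_disc r (\<lambda>x. (vector [\<psi> x, 0] :: real^2) $ 1)"
      using C2c_of_cs[OF C2\<psi> cs\<psi> lt] by simp
    show "C2c_disc r (\<lambda>x. (vector [\<psi> x, 0] :: real^2) $ 2)"
      using C2c_of_cs[OF C2_zero cs_0[OF order_refl] r] by simp
  qed
  have adm2: "admissible_field r (\<lambda>x. 0)"
    unfolding admissible_field_def using C2c_of_cs[OF C2_zero cs_0[OF order_refl] r] by simp
  have hline: "ray_transform (g (p i)) \<psi> x + ray_transform (- g (p i)) \<psi> x = 0" if i: "i < k" for i x
  proof -
    define ch where "ch = Dop ({..<k} - {i}) a (bump \<rho>)"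
    have csch: "cs (\<rho> + (\<Sum>j\<in>{..<k} - {i}. norm (a j))) ch"
      unfolding ch_def by (rule cs_Dop[OF cs_bump[OF \<rho>0]]) simp
    have "\<psi> = (\<lambda>y. ch y - ch (y + s *\<^sub>R g (p i)))"
    proof (rule ext)
      fix y
      have "\<psi> y = Dop ({..<k} - {i}) a (\<lambda>y. bump \<rho> y - bump \<rho> (y + a i)) y"
        unfolding \<psi>_def by (rule Dop_remove) (use i in auto)
      also have "\<dots> = ch y - ch (y + a i)" unfolding ch_def by (rule Dop_diff)
      finally show "\<psi> y = ch y - ch (y + s *\<^sub>R g (p i))" unfolding a_def .
    qed
    moreover have "norm (g (p i)) = 1" using units pin[OF i] by simp
    ultimately show ?thesis using line_zero[OF csch _ less_imp_le[OF s0]] by simp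
  qed
  have inner_f1: "f1 y \<bullet> v = \<psi> y * v $ 1" for y v unfolding f1_def by (simp add: inner2)
  have perm2: "p permutes {..<2 * k}" using perm mk by simp
  have S1: "star_transform m g c f1 = (\<lambda>x. 0)"
  proof (rule ext)
    fix x
    have c1: "star_transform m g c f1 x $ 1 = 0"
      unfolding star_comp1 inner_f1 ray_scale mk
      by (rule comp_zero[OF perm2 pr, where \<beta>="\<lambda>v. v $ 1"]) (use hline in auto)
    have c2: "star_transform m g c f1 x $ 2 = 0"
      unfolding star_comp2 inner_f1 ray_scale mk perp1
      by (rule comp_zero[OF perm2 pr, where \<beta>="\<lambda>v. - (v $ 2)"]) (use hline in auto)
    show "star_transform m g c f1 x = 0" using c1 c2 by (simp add: vec2_eq)
  qed
  have S2: "star_transform m g c (\<lambda>x. 0) = (\<lambda>x. 0)"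
    by (rule ext) (simp add: vec2_eq star_comp1 star_comp2 ray_zero)
  have ne: "f1 \<noteq> (\<lambda>x. 0)"
  proof
    assume "f1 = (\<lambda>x. 0)"
    then have "f1 x0 $ 1 = 0" by simp
    then show False using x0 unfolding f1_def by simp
  qed
  show ?thesis unfolding star_invertible_def using adm1 adm2 S1 S2 ne by metis
qed

theorem theorem8:
  fixes r :: real and m :: nat and g :: "nat \<Rightarrow> real^2" and c :: "nat \<Rightarrow> real"
  assumes "r > 0" and "m \<ge> 1"
    and "\<forall>i<m. norm (g i) = 1"
    and "inj_on g {..<m}"
    and "\<forall>i<m. c i \<noteq> 0"
  shows "star_invertible r m g c \<longleftrightarrow> \<not> star_symmetric m g c"
  using invertible_if_not_sym[OF assms(1,2,3,4,5)] not_invertible_if_sym[OF assms(1,3)] by blast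

end
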